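(* Let $\mathsf{k}$ be a field of characteristic zero, $S=\mathsf{k}[x,y,z]$, $R=\mathsf{k}[X,Y,Z]$ with $S$ acting by differentiation. Let $F\in R$ be nonzero homogeneous of odd degree $d\ge3$, $A=S/\operatorname{Ann}_S(F)$, and $\ell\in S_1$ with $\ell^2\ne0$ and $\ell^3=0$ in $A$. Set $(r,s,t)=(h_{A^{(2)}}(\frac{d-1}2),h_{A^{(1)}}(\frac{d-1}2),h_A(\frac{d-1}2))$. Then: (1) If $d\ge5$, $r\in[1,\frac{d-1}2-1]$, $s\in[2r,\frac{d-1}2+r]$ and $t\in[2s-r,\frac{d-1}2+s+1]$, then $h_{A^{(2)}}(i)=i+1$ for $0\le i\le r-1$ and $h_{A^{(2)}}(i)=r$ for $r\le i\le\frac{d-1}2$; $h_{A^{(1)}}(i)=2i+1$ for $0\le i\le r-1$, $h_{A^{(1)}}(i)=i+r+1$ for $r\le i\le s-r-1$, $h_{A^{(1)}}(i)=s$ for $s-r\le i\le\frac{d-1}2$. If $t=3r$, then $h_A$ on $0\le i\le\frac{d-1}2$ is one of: (a) $h_A(0)=1$, $h_A(i)=3i$ for $1\le i\le r-1$, $h_A(i)=3r$ for $r\le i\le\frac{d-1}2$; or (b) $h_A(0)=1$, $h_A(i)=3i$ for $1\le i\le r-1$, $h_A(r)=3r-1$, $h_A(i)=3r$ for $r+1\le i\le\frac{d-1}2$. Otherwise: $h_A(0)=1$; $h_A(i)=3i$ for $1\le i\le r$; $h_A(i)=2i+r+1$ for $r+1\le i\le s-r-1$; at $i=s-r$, $h_A(i)=2i+r+1$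 if $t>2s-r$ and $s>2r$, and $h_A(i)=2i+r$ if $t>2s-r$ and $s=2r$; $h_A(i)=i+s+1$ for $s-r+1\le i\le t-s-1$; $h_A(i)=t$ for $t-s\le i\le\frac{d-1}2$. (2) If $d\ge3$, $r\in[1,\frac{d-1}2-1]$, $s=\frac{d-1}2+r+1$ and $t=d+r$, then $h_{A^{(1)}}(i)=2i+1$ for $0\le i\le r$ and $h_{A^{(1)}}(i)=i+1+r$ for $r+1\le i\le\frac{d-1}2$; and $h_A(0)=1$, $h_A(i)=3i$ for $1\le i\le r+1$, $h_A(i)=2i+1+r$ for $r+2\le i\le\frac{d-1}2$. (3) If $d\ge3$, $r=\frac{d-1}2$, $s\in[d-1,d]$ and $t\in[\frac{d-1}2+s-1,3\cdot\frac{d-1}2]$, then for every $i\in[0,\frac{d-1}2-1]$: $h_{A^{(2)}}(i)=i+1$, $h_{A^{(1)}}(i)=2i+1$, and $h_A(0)=1$, $h_A(i)=3i$ for $i\ge1$.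
   Context: $x,y,z$ act as $\partial/\partial X,\partial/\partial Y,\partial/\partial Z$; $\operatorname{Ann}_S(G)=\{g\in S:g\circ G=0\}$. $\ell^k=0$ in $A$ means $\ell^k\circ F=0$. $A^{(i)}:=S/\operatorname{Ann}_S(\ell^i\circ F)$; $h_B(j)=\dim_{\mathsf{k}}B_j$. Intervals $[a,b]$ denote sets of integers. *)

theory Defs
  imports "HOL-Computational_Algebra.Polynomial"
begin

text \<open>Trivariate polynomials k[X,Y,Z] (resp. k[x,y,z]) are represented as nested
univariate polynomials: Z is the outermost variable, X the innermost.\<close>

type_synonym 'a poly3 = "'a poly poly poly"

definition coeff3 :: "'a::zero poly3 \<Rightarrow> nat \<Rightarrow> nat \<Rightarrow> nat \<Rightarrow> 'a" where
  "coeff3 p a b c = coeff (coeff (coeff p c) b) a"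

definition cscale :: "'a::comm_ring_1 \<Rightarrow> 'a poly3 \<Rightarrow> 'a poly3" where
  "cscale k p = smult [:[:k:]:] p"

text \<open>Homogeneous of degree j (the zero polynomial is homogeneous of every degree).\<close>
definition homog :: "nat \<Rightarrow> 'a::zero poly3 \<Rightarrow> bool" where
  "homog j p \<longleftrightarrow> (\<forall>a b c. coeff3 p a b c \<noteq> 0 \<longrightarrow> a + b + c = j)"

definition graded :: "nat \<Rightarrow> 'a::zero poly3 set" where
  "graded j = {p. homog j p}"

definition dX :: "'a::idom poly3 \<Rightarrow> 'a poly3" where
  "dX F = map_poly (map_poly pderiv) F"
definition dY :: "'a::idom poly3 \<Rightarrow> 'a poly3" where
  "dY F = map_poly pderiv F"
definition dZ :: "'a::idom poly3 \<Rightarrow> 'a poly3" where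
  "dZ F = pderiv F"

definition act :: "'a::idom poly3 \<Rightarrow> 'a poly3 \<Rightarrow> 'a poly3" where
  "act g F = (\<Sum>c\<le>degree g. \<Sum>b\<le>degree (coeff g c). \<Sum>a\<le>degree (coeff (coeff g c) b).
      cscale (coeff3 g a b c) ((dX ^^ a) ((dY ^^ b) ((dZ ^^ c) F))))"

definition Ann :: "'a::idom poly3 \<Rightarrow> 'a poly3 set" where
  "Ann G = {g. act g G = 0}"

definition kdim :: "'a::field poly3 set \<Rightarrow> nat" where
  "kdim V = vector_space.dim cscale V"

definition hilb :: "'a::field poly3 \<Rightarrow> nat \<Rightarrow> nat" where
  "hilb G j = kdim (graded j :: 'a poly3 set) - kdim (graded j \<inter> Ann G)"

end

theory Submission
  imports Defs
begin

lemma poly3_eqI: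
  assumes "\<And>a b c. coeff3 p a b c = coeff3 q a b c" shows "p = q"
  using assms unfolding coeff3_def by (auto simp: poly_eq_iff)

lemma coeff3_0[simp]: "coeff3 0 a b c = 0" by (simp add: coeff3_def)
lemma coeff3_add[simp]: "coeff3 (p + q) a b c = coeff3 p a b c + coeff3 q a b c"
  by (simp add: coeff3_def)
lemma coeff3_diff[simp]: "coeff3 (p - q) a b c = coeff3 p a b c - coeff3 q a b c"
  by (simp add: coeff3_def)
lemma coeff3_minus[simp]: "coeff3 (- p) a b c = - coeff3 p a b c"
  by (simp add: coeff3_def)
lemma coeff3_cscale[simp]: "coeff3 (cscale k p) a b c = k * coeff3 p a b c"
  by (simp add: coeff3_def cscale_def)
lemma coeff3_sum: "coeff3 (sum f S) a b c = (\<Sum>x\<in>S. coeff3 (f x) a b c)"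
  by (induction S rule: infinite_finite_induct) auto

interpretation V: vector_space "cscale :: 'a::field \<Rightarrow> 'a poly3 \<Rightarrow> 'a poly3"
  by unfold_locales (auto intro!: poly3_eqI simp: algebra_simps)

lemma kdim_V: "kdim = V.dim" by (simp add: kdim_def fun_eq_iff)

lemma coeff3_dX: "coeff3 (dX F) a b c = of_nat (Suc a) * coeff3 F (Suc a) b c"
  by (simp add: coeff3_def dX_def coeff_map_poly coeff_pderiv)
lemma coeff3_dY: "coeff3 (dY F) a b c = of_nat (Suc b) * coeff3 F a (Suc b) c"
  by (simp add: coeff3_def dY_def coeff_map_poly coeff_pderiv of_nat_poly)
lemma coeff3_dZ: "coeff3 (dZ F) a b c = of_nat (Suc c) * coeff3 F a b (Suc c)"
  by (simp add: coeff3_def dZ_def coeff_map_poly coeff_pderiv of_nat_poly)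

lemma dX_add[simp]: "dX (p + q) = dX p + dX q"
  by (rule poly3_eqI) (simp add: coeff3_dX algebra_simps)
lemma dY_add[simp]: "dY (p + q) = dY p + dY q"
  by (rule poly3_eqI) (simp add: coeff3_dY algebra_simps)
lemma dZ_add[simp]: "dZ (p + q) = dZ p + dZ q"
  by (rule poly3_eqI) (simp add: coeff3_dZ algebra_simps)
lemma dX_cscale[simp]: "dX (cscale k p) = cscale k (dX p)"
  by (rule poly3_eqI) (simp add: coeff3_dX algebra_simps)
lemma dY_cscale[simp]: "dY (cscale k p) = cscale k (dY p)"
  by (rule poly3_eqI) (simp add: coeff3_dY algebra_simps)
lemma dZ_cscale[simp]: "dZ (cscale k p) = cscale k (dZ p)"
  by (rule poly3_eqI) (simp add: coeff3_dZ algebra_simps)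
lemma dX_0[simp]: "dX 0 = 0" by (rule poly3_eqI) (simp add: coeff3_dX)
lemma dY_0[simp]: "dY 0 = 0" by (rule poly3_eqI) (simp add: coeff3_dY)
lemma dZ_0[simp]: "dZ 0 = 0" by (rule poly3_eqI) (simp add: coeff3_dZ)

lemma dXY: "dX (dY p) = dY (dX p)"
  by (rule poly3_eqI) (simp add: coeff3_dX coeff3_dY algebra_simps)
lemma dXZ: "dX (dZ p) = dZ (dX p)"
  by (rule poly3_eqI) (simp add: coeff3_dX coeff3_dZ algebra_simps)
lemma dYZ: "dY (dZ p) = dZ (dY p)"
  by (rule poly3_eqI) (simp add: coeff3_dY coeff3_dZ algebra_simps)

lemma linI:
  fixes f :: "'a::field poly3 \<Rightarrow> 'a poly3"
  assumes "\<And>x y. f (x + y) = f x + f y" "\<And>c x. f (cscale c x) = cscale c (f x)"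
  shows "Vector_Spaces.linear cscale cscale f"
  using assms by (simp add: Vector_Spaces.linear_iff V.vector_space_axioms)

lemma linear_dX: "Vector_Spaces.linear cscale cscale (dX :: 'a::field_char_0 poly3 \<Rightarrow> _)"
  by (rule linI) auto
lemma linear_dY: "Vector_Spaces.linear cscale cscale (dY :: 'a::field_char_0 poly3 \<Rightarrow> _)"
  by (rule linI) auto
lemma linear_dZ: "Vector_Spaces.linear cscale cscale (dZ :: 'a::field_char_0 poly3 \<Rightarrow> _)"
  by (rule linI) auto

lemma coeff3_dX_pow:
  "of_nat (fact a) * coeff3 ((dX ^^ k) F) a b c = of_nat (fact (a + k)) * coeff3 F (a + k) b c"
proof (induction k arbitrary: a)
  case 0 then show ?case by simp
next
  case (Suc k)
  have "of_nat (fact a) * coeff3 ((dX ^^ Suc k) F) a b c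
      = of_nat (fact (Suc a)) * coeff3 ((dX ^^ k) F) (Suc a) b c"
    by (simp add: coeff3_dX fact_Suc algebra_simps)
  also have "\<dots> = of_nat (fact (a + Suc k)) * coeff3 F (a + Suc k) b c"
    using Suc[of "Suc a"] by simp
  finally show ?case .
qed

lemma coeff3_dY_pow:
  "of_nat (fact b) * coeff3 ((dY ^^ k) F) a b c = of_nat (fact (b + k)) * coeff3 F a (b + k) c"
proof (induction k arbitrary: b)
  case 0 then show ?case by simp
next
  case (Suc k)
  have "of_nat (fact b) * coeff3 ((dY ^^ Suc k) F) a b c
      = of_nat (fact (Suc b)) * coeff3 ((dY ^^ k) F) a (Suc b) c"
    by (simp add: coeff3_dY fact_Suc algebra_simps)
  also have "\<dots> = of_nat (fact (b + Suc k)) * coeff3 F a (b + Suc k) c"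
    using Suc[of "Suc b"] by simp
  finally show ?case .
qed

lemma coeff3_dZ_pow:
  "of_nat (fact c) * coeff3 ((dZ ^^ k) F) a b c = of_nat (fact (c + k)) * coeff3 F a b (c + k)"
proof (induction k arbitrary: c)
  case 0 then show ?case by simp
next
  case (Suc k)
  have "of_nat (fact c) * coeff3 ((dZ ^^ Suc k) F) a b c
      = of_nat (fact (Suc c)) * coeff3 ((dZ ^^ k) F) a b (Suc c)"
    by (simp add: coeff3_dZ fact_Suc algebra_simps)
  also have "\<dots> = of_nat (fact (c + Suc k)) * coeff3 F a b (c + Suc k)"
    using Suc[of "Suc c"] by simp
  finally show ?case .
qed

definition Dop :: "nat \<Rightarrow> nat \<Rightarrow> nat \<Rightarrow> 'a::idom poly3 \<Rightarrow> 'a poly3" where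
  "Dop a b c F = (dX ^^ a) ((dY ^^ b) ((dZ ^^ c) F))"

lemma coeff3_Dop:
  "of_nat (fact a * fact b * fact c) * coeff3 (Dop a' b' c' F) a b c
   = of_nat (fact (a + a') * fact (b + b') * fact (c + c')) * coeff3 F (a + a') (b + b') (c + c')"
proof -
  have "of_nat (fact a * fact b * fact c) * coeff3 (Dop a' b' c' F) a b c
     = of_nat (fact b * fact c) * (of_nat (fact a) * coeff3 ((dX ^^ a') ((dY ^^ b') ((dZ ^^ c') F))) a b c)"
    by (simp add: Dop_def algebra_simps)
  also have "\<dots> = of_nat (fact (a + a')) * of_nat (fact c) * (of_nat (fact b) * coeff3 ((dY ^^ b') ((dZ ^^ c') F)) (a + a') b c)"
    by (simp only: coeff3_dX_pow) (simp add: algebra_simps)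
  also have "\<dots> = of_nat (fact (a + a')) * of_nat (fact (b + b')) * (of_nat (fact c) * coeff3 ((dZ ^^ c') F) (a + a') (b + b') c)"
    by (simp only: coeff3_dY_pow) (simp add: algebra_simps)
  also have "\<dots> = of_nat (fact (a + a')) * of_nat (fact (b + b')) * (of_nat (fact (c + c')) * coeff3 F (a + a') (b + b') (c + c'))"
    by (simp only: coeff3_dZ_pow)
  finally show ?thesis by (simp add: algebra_simps)
qed

lemma coeff3_Dop_eq:
  fixes F :: "'a::field_char_0 poly3"
  shows "coeff3 (Dop a' b' c' F) a b c
   = of_nat (fact (a + a') * fact (b + b') * fact (c + c')) / of_nat (fact a * fact b * fact c)
       * coeff3 F (a + a') (b + b') (c + c')"
proof -
  have nz: "(of_nat (fact a * fact b * fact c) :: 'a) \<noteq> 0"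
    by (simp add: fact_nonzero)
  show ?thesis using coeff3_Dop[of a b c a' b' c' F] nz
    by (simp add: field_simps)
qed

lemma Dop_add[simp]: "Dop a b c (p + q) = Dop a b c p + Dop a b c (q::'a::field_char_0 poly3)"
  by (rule poly3_eqI) (simp add: coeff3_Dop_eq distrib_left add_divide_distrib)
lemma Dop_cscale[simp]: "Dop a b c (cscale k p) = cscale k (Dop a b c (p::'a::field_char_0 poly3))"
  by (rule poly3_eqI) (simp add: coeff3_Dop_eq algebra_simps)
lemma Dop_0[simp]: "Dop a b c (0::'a::field_char_0 poly3) = 0"
  by (rule poly3_eqI) (simp add: coeff3_Dop_eq)
lemma Dop_sum: "Dop a b c (sum f S) = (\<Sum>x\<in>S. Dop a b c (f x :: 'a::field_char_0 poly3))"
  by (induction S rule: infinite_finite_induct) auto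
lemma Dop_000[simp]: "Dop 0 0 0 F = F" by (simp add: Dop_def)
lemma Dop_100: "Dop 1 0 0 F = dX F" by (simp add: Dop_def)
lemma Dop_010: "Dop 0 1 0 F = dY F" by (simp add: Dop_def)
lemma Dop_001: "Dop 0 0 1 F = dZ F" by (simp add: Dop_def)

lemma fact_nz: "(of_nat (fact n) :: 'a::field_char_0) \<noteq> 0"
  by simp

lemma Dop_Dop:
  fixes F :: "'a::field_char_0 poly3"
  shows "Dop a b c (Dop a' b' c' F) = Dop (a + a') (b + b') (c + c') F"
proof (rule poly3_eqI)
  fix x y z
  have e1: "of_nat (fact x * fact y * fact z) * coeff3 (Dop a b c (Dop a' b' c' F)) x y z
    = of_nat (fact (x + a) * fact (y + b) * fact (z + c)) * coeff3 (Dop a' b' c' F) (x + a) (y + b) (z + c)"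
    by (rule coeff3_Dop)
  have e2: "of_nat (fact (x + a) * fact (y + b) * fact (z + c)) * coeff3 (Dop a' b' c' F) (x + a) (y + b) (z + c)
    = of_nat (fact (x + a + a') * fact (y + b + b') * fact (z + c + c')) * coeff3 F (x + a + a') (y + b + b') (z + c + c')"
    by (rule coeff3_Dop)
  have e3: "of_nat (fact x * fact y * fact z) * coeff3 (Dop (a + a') (b + b') (c + c') F) x y z
    = of_nat (fact (x + (a + a')) * fact (y + (b + b')) * fact (z + (c + c'))) * coeff3 F (x + (a + a')) (y + (b + b')) (z + (c + c'))"
    by (rule coeff3_Dop)
  have nz: "(of_nat (fact x * fact y * fact z) :: 'a) \<noteq> 0" by simp
  have "of_nat (fact x * fact y * fact z) * coeff3 (Dop a b c (Dop a' b' c' F)) x y z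
     = of_nat (fact x * fact y * fact z) * coeff3 (Dop (a + a') (b + b') (c + c') F) x y z"
    using e1 e2 e3 by (simp only: add.assoc)
  with nz show "coeff3 (Dop a b c (Dop a' b' c' F)) x y z = coeff3 (Dop (a + a') (b + b') (c + c') F) x y z"
    using mult_left_cancel by blast
qed

lemma Dop_comm: "Dop a b c (Dop a' b' c' F) = Dop a' b' c' (Dop a b c (F::'a::field_char_0 poly3))"
  by (simp add: Dop_Dop add.commute)

lemma homog_Dop:
  fixes F :: "'a::field_char_0 poly3"
  assumes "homog n F"
  shows "homog (n - (a + b + c)) (Dop a b c F)"
    and "a + b + c > n \<Longrightarrow> Dop a b c F = 0"
proof -
  have key: "coeff3 (Dop a b c F) x y z \<noteq> 0 \<Longrightarrow> x + a + (y + b) + (z + c) = n" for x y z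
    using assms unfolding homog_def by (auto simp: coeff3_Dop_eq)
  show "homog (n - (a + b + c)) (Dop a b c F)"
    unfolding homog_def using key by fastforce
  show "a + b + c > n \<Longrightarrow> Dop a b c F = 0"
    using key by (intro poly3_eqI) fastforce
qed

lemma pairing_zero:
  fixes H :: "'a::field_char_0 poly3"
  assumes "homog n H" and "\<And>a b c. a + b + c = n \<Longrightarrow> Dop a b c H = 0"
  shows "H = 0"
proof (rule poly3_eqI)
  fix a b c
  show "coeff3 H a b c = coeff3 0 a b c"
  proof (cases "a + b + c = n")
    case True
    have "of_nat (fact 0 * fact 0 * fact 0) * coeff3 (Dop a b c H) 0 0 0
      = of_nat (fact (0 + a) * fact (0 + b) * fact (0 + c)) * coeff3 H (0 + a) (0 + b) (0 + c)"
      by (rule coeff3_Dop)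
    then show ?thesis using assms(2)[OF True] by simp
  next
    case False
    then show ?thesis using assms(1) unfolding homog_def by auto
  qed
qed

definition BND :: "'a::zero poly3 \<Rightarrow> nat \<Rightarrow> bool" where
  "BND g N \<longleftrightarrow> (\<forall>a b c. coeff3 g a b c \<noteq> 0 \<longrightarrow> a \<le> N \<and> b \<le> N \<and> c \<le> N)"

lemma BND_mono: "BND g N \<Longrightarrow> N \<le> M \<Longrightarrow> BND g M"
  unfolding BND_def by force

lemma homog_BND: "homog n g \<Longrightarrow> BND g n"
  unfolding BND_def homog_def by force

lemma sum_atMost_ext:
  assumes "\<And>i. i > M \<Longrightarrow> f i = 0" "\<And>i. i > N \<Longrightarrow> f i = 0"
  shows "sum f {..M} = sum f {..(N::nat)}"
proof -
  have "sum f {..M} = sum f {..max M N}"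
    by (rule sum.mono_neutral_left) (auto simp: assms)
  also have "\<dots> = sum f {..N}"
    by (rule sum.mono_neutral_right) (auto simp: assms)
  finally show ?thesis .
qed

lemma BND_ex: "\<exists>N. BND (g::'a::zero poly3) N"
proof -
  define N where "N = degree g + (\<Sum>c\<le>degree g. degree (coeff g c))
      + (\<Sum>c\<le>degree g. \<Sum>b\<le>degree (coeff g c). degree (coeff (coeff g c) b))"
  have "BND g N" unfolding BND_def
  proof (intro allI impI)
    fix a b c assume nz: "coeff3 g a b c \<noteq> 0"
    then have c: "c \<le> degree g" unfolding coeff3_def by (metis coeff_0 le_degree)
    from nz have b: "b \<le> degree (coeff g c)" unfolding coeff3_def by (metis coeff_0 le_degree)
    from nz have a: "a \<le> degree (coeff (coeff g c) b)" unfolding coeff3_def by (metis le_degree)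
    have "degree (coeff g c) \<le> (\<Sum>c\<le>degree g. degree (coeff g c))"
      by (rule member_le_sum) (use c in auto)
    moreover have "degree (coeff (coeff g c) b) \<le> (\<Sum>b\<le>degree (coeff g c). degree (coeff (coeff g c) b))"
      by (rule member_le_sum) (use b in auto)
    moreover have "(\<Sum>b\<le>degree (coeff g c). degree (coeff (coeff g c) b)) \<le>
       (\<Sum>c\<le>degree g. \<Sum>b\<le>degree (coeff g c). degree (coeff (coeff g c) b))"
      by (rule member_le_sum[where f = "\<lambda>c. \<Sum>b\<le>degree (coeff g c). degree (coeff (coeff g c) b)"]) (use c in auto)
    ultimately show "a \<le> N \<and> b \<le> N \<and> c \<le> N" using a b c unfolding N_def by linarith
  qed
  then show ?thesis by blast
qed

lemma act_box:
  fixes g F :: "'a::field_char_0 poly3"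
  assumes "BND g N"
  shows "act g F = (\<Sum>c\<le>N. \<Sum>b\<le>N. \<Sum>a\<le>N. cscale (coeff3 g a b c) (Dop a b c F))"
proof -
  have inner: "(\<Sum>a\<le>degree (coeff (coeff g c) b). cscale (coeff3 g a b c) (Dop a b c F))
      = (\<Sum>a\<le>N. cscale (coeff3 g a b c) (Dop a b c F))" for b c
  proof (rule sum_atMost_ext)
    fix a assume "a > degree (coeff (coeff g c) b)"
    then show "cscale (coeff3 g a b c) (Dop a b c F) = 0" by (simp add: coeff3_def coeff_eq_0 cscale_def)
  next
    fix a assume "a > N"
    then have "coeff3 g a b c = 0" using assms by (force simp: BND_def)
    then show "cscale (coeff3 g a b c) (Dop a b c F) = 0" by (simp add: cscale_def)
  qed
  have mid: "(\<Sum>b\<le>degree (coeff g c). \<Sum>a\<le>N. cscale (coeff3 g a b c) (Dop a b c F))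
      = (\<Sum>b\<le>N. \<Sum>a\<le>N. cscale (coeff3 g a b c) (Dop a b c F))" for c
  proof (rule sum_atMost_ext)
    fix b assume "b > degree (coeff g c)"
    then have "coeff3 g a b c = 0" for a by (simp add: coeff3_def coeff_eq_0)
    then show "(\<Sum>a\<le>N. cscale (coeff3 g a b c) (Dop a b c F)) = 0" by (simp add: cscale_def)
  next
    fix b assume "b > N"
    then have "coeff3 g a b c = 0" for a using assms by (force simp: BND_def)
    then show "(\<Sum>a\<le>N. cscale (coeff3 g a b c) (Dop a b c F)) = 0" by (simp add: cscale_def)
  qed
  have outer: "(\<Sum>c\<le>degree g. \<Sum>b\<le>N. \<Sum>a\<le>N. cscale (coeff3 g a b c) (Dop a b c F))
      = (\<Sum>c\<le>N. \<Sum>b\<le>N. \<Sum>a\<le>N. cscale (coeff3 g a b c) (Dop a b c F))"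
  proof (rule sum_atMost_ext)
    fix c assume "c > degree g"
    then have "coeff3 g a b c = 0" for a b by (simp add: coeff3_def coeff_eq_0)
    then show "(\<Sum>b\<le>N. \<Sum>a\<le>N. cscale (coeff3 g a b c) (Dop a b c F)) = 0" by (simp add: cscale_def)
  next
    fix c assume "c > N"
    then have "coeff3 g a b c = 0" for a b using assms by (force simp: BND_def)
    then show "(\<Sum>b\<le>N. \<Sum>a\<le>N. cscale (coeff3 g a b c) (Dop a b c F)) = 0" by (simp add: cscale_def)
  qed
  show ?thesis
    unfolding act_def Dop_def[symmetric] inner mid outer ..
qed

lemma cscale_0[simp]: "cscale 0 p = 0" by (simp add: cscale_def)
lemma cscale_1[simp]: "cscale 1 p = p" by (rule poly3_eqI) simp
lemma cscale_zero[simp]: "cscale k 0 = 0" by (simp add: cscale_def)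
lemma cscale_add_right: "cscale k (p + q) = cscale k p + cscale k q" by (simp add: cscale_def smult_add_right)
lemma cscale_add_left: "cscale (k + l) p = cscale k p + cscale l p"
  by (rule poly3_eqI) (simp add: algebra_simps)
lemma cscale_cscale: "cscale k (cscale l p) = cscale (k * l) (p :: 'a::field poly3)"
  by (rule poly3_eqI) (simp add: algebra_simps)
lemma cscale_sum: "cscale k (sum f S) = (\<Sum>x\<in>S. cscale k (f x))"
  by (induction S rule: infinite_finite_induct) (auto simp: cscale_add_right)
lemma cscale_mult: "cscale k p * cscale l q = cscale (k * l) (p * q :: 'a::field poly3)"
  by (simp add: cscale_def mult_smult_left mult_smult_right mult.commute)

lemma triple_delta:
  "(\<Sum>c\<le>N. \<Sum>b\<le>N. \<Sum>a\<le>(N::nat). if a = x \<and> b = y \<and> c = z then f a b c else 0)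
   = (if x \<le> N \<and> y \<le> N \<and> z \<le> N then f x y z else 0)"
proof -
  have i: "(\<Sum>a\<le>N. if a = x \<and> b = y \<and> c = z then f a b c else 0) = (if x \<le> N \<and> b = y \<and> c = z then f x b c else 0)" for b c
    by (cases "b = y \<and> c = z") (auto simp: sum.delta)
  have m: "(\<Sum>b\<le>N. if x \<le> N \<and> b = y \<and> c = z then f x b c else 0) = (if x \<le> N \<and> y \<le> N \<and> c = z then f x y c else 0)" for c
    by (cases "x \<le> N \<and> c = z") (auto simp: sum.delta)
  have o: "(\<Sum>c\<le>N. if x \<le> N \<and> y \<le> N \<and> c = z then f x y c else 0) = (if x \<le> N \<and> y \<le> N \<and> z \<le> N then f x y z else 0)"
    by (cases "x \<le> N \<and> y \<le> N") (auto simp: sum.delta)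
  show ?thesis unfolding i m o ..
qed

definition m3 :: "nat \<Rightarrow> nat \<Rightarrow> nat \<Rightarrow> 'a::field poly3" where
  "m3 a b c = monom (monom (monom 1 a) b) c"

lemma coeff3_m3: "coeff3 (m3 a b c) a' b' c' = (if a' = a \<and> b' = b \<and> c' = c then 1 else 0)"
  by (auto simp: m3_def coeff3_def coeff_monom)

lemma m3_mult: "m3 a b c * m3 a' b' c' = m3 (a + a') (b + b') (c + c')"
  by (simp add: m3_def mult_monom)

lemma BND_m3: "BND (m3 a b c) (max a (max b c))"
  unfolding BND_def by (auto simp: coeff3_m3)

lemma homog_m3: "homog (a + b + c) (m3 a b c)"
  unfolding homog_def by (auto simp: coeff3_m3)

lemma act_m3:
  fixes F :: "'a::field_char_0 poly3"
  shows "act (m3 a b c) F = Dop a b c F"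
proof -
  define N where "N = max a (max b c)"
  have "act (m3 a b c) F = (\<Sum>c'\<le>N. \<Sum>b'\<le>N. \<Sum>a'\<le>N. cscale (coeff3 (m3 a b c) a' b' c') (Dop a' b' c' F))"
    using act_box BND_m3 N_def by blast
  also have "\<dots> = (\<Sum>c'\<le>N. \<Sum>b'\<le>N. \<Sum>a'\<le>N. (if a' = a \<and> b' = b \<and> c' = c then Dop a' b' c' F else 0))"
    by (intro sum.cong refl) (auto simp: coeff3_m3)
  also have "\<dots> = Dop a b c F"
    by (simp only: triple_delta) (simp add: N_def le_max_iff_disj)
  finally show ?thesis .
qed

lemma expand3:
  fixes g :: "'a::field poly3"
  assumes "BND g N"
  shows "g = (\<Sum>c\<le>N. \<Sum>b\<le>N. \<Sum>a\<le>N. cscale (coeff3 g a b c) (m3 a b c))"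
proof (rule poly3_eqI)
  fix x y z
  have "coeff3 (\<Sum>c\<le>N. \<Sum>b\<le>N. \<Sum>a\<le>N. cscale (coeff3 g a b c) (m3 a b c)) x y z
      = (\<Sum>c\<le>N. \<Sum>b\<le>N. \<Sum>a\<le>N. (if a = x \<and> b = y \<and> c = z then coeff3 g a b c else 0))"
    by (simp add: coeff3_sum coeff3_m3) (intro sum.cong refl; auto)
  also have "\<dots> = (if x \<le> N \<and> y \<le> N \<and> z \<le> N then coeff3 g x y z else 0)"
    by (rule triple_delta)
  also have "\<dots> = coeff3 g x y z"
    using assms unfolding BND_def by auto
  finally show "coeff3 g x y z = coeff3 (\<Sum>c\<le>N. \<Sum>b\<le>N. \<Sum>a\<le>N. cscale (coeff3 g a b c) (m3 a b c)) x y z"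
    by simp
qed

lemma act_add_right: "act g (p + q) = act g p + act g (q :: 'a::field_char_0 poly3)"
proof -
  obtain N where N: "BND g N" using BND_ex by blast
  show ?thesis unfolding act_box[OF N]
    by (simp add: cscale_add_right sum.distrib)
qed

lemma act_cscale_right: "act g (cscale k p) = cscale k (act g (p :: 'a::field_char_0 poly3))"
proof -
  obtain N where N: "BND g N" using BND_ex by blast
  show ?thesis unfolding act_box[OF N]
    by (simp add: cscale_cscale cscale_sum mult.commute)
qed

lemma act_zero_right[simp]: "act g (0 :: 'a::field_char_0 poly3) = 0"
  using act_add_right[of g 0 0] by simp

lemma act_sum_right: "act g (sum f S) = (\<Sum>x\<in>S. act g (f x :: 'a::field_char_0 poly3))"
  by (induction S rule: infinite_finite_induct) (auto simp: act_add_right)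

lemma BND_add: "BND p N \<Longrightarrow> BND q N \<Longrightarrow> BND (p + q) N"
  unfolding BND_def by (metis add.right_neutral coeff3_add)

lemma BND_cscale: "BND p N \<Longrightarrow> BND (cscale k p) N"
  unfolding BND_def by (metis coeff3_cscale mult_zero_right)

lemma act_add_left: "act (p + q) F = act p F + act q (F :: 'a::field_char_0 poly3)"
proof -
  obtain N1 where N1: "BND p N1" using BND_ex by blast
  obtain N2 where N2: "BND q N2" using BND_ex by blast
  define N where "N = max N1 N2"
  have p: "BND p N" and q: "BND q N" using BND_mono[OF N1] BND_mono[OF N2] by (auto simp: N_def)
  show ?thesis unfolding act_box[OF p] act_box[OF q] act_box[OF BND_add[OF p q]]
    by (simp add: cscale_add_left sum.distrib)
qed

lemma act_cscale_left: "act (cscale k p) F = cscale k (act p (F :: 'a::field_char_0 poly3))"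
proof -
  obtain N where N: "BND p N" using BND_ex by blast
  show ?thesis unfolding act_box[OF N] act_box[OF BND_cscale[OF N]]
    by (simp add: cscale_cscale cscale_sum)
qed

lemma act_zero_left[simp]: "act 0 (F :: 'a::field_char_0 poly3) = 0"
  using act_add_left[of 0 0 F] by simp

lemma act_sum_left: "act (sum f S) F = (\<Sum>x\<in>S. act (f x) (F :: 'a::field_char_0 poly3))"
  by (induction S rule: infinite_finite_induct) (auto simp: act_add_left)

lemma act_Dop_comm: "act g (Dop a b c F) = Dop a b c (act g (F :: 'a::field_char_0 poly3))"
proof -
  obtain N where N: "BND g N" using BND_ex by blast
  show ?thesis unfolding act_box[OF N]
    by (simp add: Dop_sum Dop_comm)
qed

lemma act_mult': "act (p * q) F = act q (act p (F :: 'a::field_char_0 poly3))"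
proof -
  obtain N1 where N1: "BND p N1" using BND_ex by blast
  obtain N2 where N2: "BND q N2" using BND_ex by blast
  define N where "N = max N1 N2"
  have p: "BND p N" and q: "BND q N" using BND_mono[OF N1] BND_mono[OF N2] by (auto simp: N_def)
  have "p * q = (\<Sum>c\<le>N. \<Sum>b\<le>N. \<Sum>a\<le>N. cscale (coeff3 p a b c) (m3 a b c)) *
                (\<Sum>c'\<le>N. \<Sum>b'\<le>N. \<Sum>a'\<le>N. cscale (coeff3 q a' b' c') (m3 a' b' c'))"
    using expand3[OF p] expand3[OF q] by simp
  also have "\<dots> = (\<Sum>c'\<le>N. \<Sum>b'\<le>N. \<Sum>a'\<le>N. \<Sum>c\<le>N. \<Sum>b\<le>N. \<Sum>a\<le>N.
       cscale (coeff3 p a b c * coeff3 q a' b' c') (m3 (a + a') (b + b') (c + c')))"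
    by (simp add: sum_distrib_left sum_distrib_right cscale_mult m3_mult)
  finally have pq: "p * q = \<dots>" .
  have "act (p * q) F = (\<Sum>c'\<le>N. \<Sum>b'\<le>N. \<Sum>a'\<le>N. \<Sum>c\<le>N. \<Sum>b\<le>N. \<Sum>a\<le>N.
       cscale (coeff3 p a b c * coeff3 q a' b' c') (Dop (a + a') (b + b') (c + c') F))"
    unfolding pq by (simp add: act_sum_left act_cscale_left act_m3)
  also have "\<dots> = act q (act p F)"
    unfolding act_box[OF p] act_box[OF q]
    by (simp add: Dop_sum cscale_sum Dop_Dop cscale_cscale mult.commute add.commute)
  finally show ?thesis .
qed

lemma act_mult: "act (p * q) F = act p (act q (F :: 'a::field_char_0 poly3))"
  using act_mult'[of q p F] by (simp add: mult.commute)

lemma act_comm: "act p (act q F) = act q (act p (F :: 'a::field_char_0 poly3))"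
  by (metis act_mult act_mult')

interpretation VP: vector_space_pair "cscale :: 'a::field \<Rightarrow> 'a poly3 \<Rightarrow> 'a poly3" "cscale :: 'a::field \<Rightarrow> 'a poly3 \<Rightarrow> 'a poly3"
  by unfold_locales

definition fdim :: "'a::field poly3 set \<Rightarrow> bool" where
  "fdim S \<longleftrightarrow> (\<exists>B. finite B \<and> S \<subseteq> V.span B)"

lemma fdim_subset: "fdim T \<Longrightarrow> S \<subseteq> T \<Longrightarrow> fdim S"
  unfolding fdim_def by blast

lemma dim_mono_fd:
  assumes "fdim T" "S \<subseteq> T"
  shows "V.dim S \<le> V.dim T"
proof -
  obtain B0 where B0: "finite B0" "T \<subseteq> V.span B0" using assms(1) unfolding fdim_def by blast
  obtain BS where BS: "BS \<subseteq> S" "V.independent BS" "S \<subseteq> V.span BS"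
    using V.maximal_independent_subset by blast
  obtain BT where BT: "BT \<subseteq> T" "V.independent BT" "T \<subseteq> V.span BT"
    using V.maximal_independent_subset by blast
  have fT: "finite BT" using V.independent_span_bound[OF B0(1) BT(2)] BT(1) B0(2) by blast
  have "BS \<subseteq> V.span BT" using BS(1) assms(2) BT(3) by blast
  then have "card BS \<le> card BT" using V.independent_span_bound[OF fT BS(2)] by blast
  moreover have "card BS = V.dim S" using V.basis_card_eq_dim BS by blast
  moreover have "card BT = V.dim T" using V.basis_card_eq_dim BT by blast
  ultimately show ?thesis by simp
qed

lemma rank_nullity:
  fixes f :: "'a::field poly3 \<Rightarrow> 'a poly3"
  assumes lin: "Vector_Spaces.linear cscale cscale f" and S: "V.subspace S" and fd: "fdim S"
  shows "V.dim S = V.dim {x\<in>S. f x = 0} + V.dim (f ` S)"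
proof -
  define K where "K = {x\<in>S. f x = 0}"
  obtain B0 where B0: "finite B0" "S \<subseteq> V.span B0" using fd unfolding fdim_def by blast
  obtain BK where BK: "BK \<subseteq> K" "V.independent BK" "K \<subseteq> V.span BK"
    using V.maximal_independent_subset by blast
  have "BK \<subseteq> S" using BK(1) K_def by auto
  then obtain B where B: "BK \<subseteq> B" "B \<subseteq> S" "V.independent B" "S \<subseteq> V.span B"
    using V.maximal_independent_subset_extend[OF _ BK(2)] by blast
  have fB: "finite B" using V.independent_span_bound[OF B0(1) B(3)] B(2) B0(2) by blast
  have fBK: "finite BK" using B(1) fB finite_subset by blast
  have cB: "card B = V.dim S" using V.basis_card_eq_dim B(2,3,4) by blast
  have cK: "card BK = V.dim K" using V.basis_card_eq_dim BK by blast
  have le1: "V.dim (f ` S) \<le> card B - card BK"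
  proof -
    have "f ` B \<subseteq> V.span (f ` (B - BK))"
    proof
      fix y assume "y \<in> f ` B"
      then obtain b where b: "b \<in> B" "y = f b" by blast
      show "y \<in> V.span (f ` (B - BK))"
      proof (cases "b \<in> BK")
        case True then have "f b = 0" using BK(1) K_def by auto
        then show ?thesis using b V.span_zero by simp
      next
        case False then show ?thesis using b by (auto intro: V.span_base)
      qed
    qed
    then have "V.span (f ` B) \<subseteq> V.span (f ` (B - BK))" by (rule V.span_minimal) simp
    moreover have "f ` S \<subseteq> V.span (f ` B)"
      using B(4) VP.linear_span_image[OF lin, of B] by blast
    ultimately have "f ` S \<subseteq> V.span (f ` (B - BK))" by blast
    then have "V.dim (f ` S) \<le> card (f ` (B - BK))"
      using V.dim_le_card fB by blast
    also have "\<dots> \<le> card (B - BK)" by (rule card_image_le) (use fB in simp)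
    also have "\<dots> = card B - card BK" by (rule card_Diff_subset[OF fBK B(1)])
    finally show ?thesis .
  qed
  have le2: "V.dim S \<le> card BK + V.dim (f ` S)"
  proof -
    obtain D where D: "D \<subseteq> f ` S" "V.independent D" "f ` S \<subseteq> V.span D"
      using V.maximal_independent_subset by blast
    have "f ` S \<subseteq> V.span (f ` B0)"
      using B0(2) VP.linear_span_image[OF lin, of B0] by blast
    then have fD: "finite D" using V.independent_span_bound[of "f ` B0" D] B0(1) D by blast
    have cD: "card D = V.dim (f ` S)" using V.basis_card_eq_dim D by blast
    have "\<forall>d\<in>D. \<exists>x\<in>S. f x = d" using D(1) by blast
    then obtain p where p: "\<And>d. d \<in> D \<Longrightarrow> p d \<in> S \<and> f (p d) = d" by metis
    have "S \<subseteq> V.span (BK \<union> p ` D)"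
    proof
      fix x assume x: "x \<in> S"
      then have "f x \<in> V.span D" using D(3) by blast
      then obtain u where u: "f x = (\<Sum>d\<in>D. cscale (u d) d)"
        using V.span_finite[OF fD] by blast
      define w where "w = (\<Sum>d\<in>D. cscale (u d) (p d))"
      have wspan: "w \<in> V.span (BK \<union> p ` D)"
        unfolding w_def by (intro V.span_sum V.span_scale V.span_base) auto
      have wS: "w \<in> S" unfolding w_def
        by (intro V.subspace_sum[OF S] V.subspace_scale[OF S]) (use p in auto)
      have "f w = (\<Sum>d\<in>D. cscale (u d) (f (p d)))"
        unfolding w_def by (simp add: VP.linear_sum[OF lin] VP.linear_scale[OF lin])
      also have "\<dots> = f x" using u p by simp
      finally have fw: "f w = f x" .
      have "f (x - w) = 0" using fw by (simp add: VP.linear_diff[OF lin])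
      moreover have "x - w \<in> S" using x wS V.subspace_diff[OF S] by blast
      ultimately have "x - w \<in> K" unfolding K_def by blast
      then have "x - w \<in> V.span (BK \<union> p ` D)" using BK(3) V.span_mono[of BK "BK \<union> p ` D"] by blast
      then have "(x - w) + w \<in> V.span (BK \<union> p ` D)" using wspan V.span_add by blast
      then show "x \<in> V.span (BK \<union> p ` D)" by simp
    qed
    then have "V.dim S \<le> card (BK \<union> p ` D)" using V.dim_le_card fBK fD by blast
    also have "\<dots> \<le> card BK + card (p ` D)" by (rule card_Un_le)
    also have "\<dots> \<le> card BK + card D" using card_image_le[OF fD, of p] by simp
    finally show ?thesis using cD by simp
  qed
  have "card BK \<le> card B" using card_mono[OF fB B(1)] .
  with le1 le2 cB cK show ?thesis unfolding K_def by linarith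
qed

lemma codim1:
  fixes \<phi> :: "'a::field poly3 \<Rightarrow> 'a"
  assumes add: "\<And>x y. \<phi> (x + y) = \<phi> x + \<phi> y" and sc: "\<And>c x. \<phi> (cscale c x) = c * \<phi> x"
    and S: "V.subspace S" and fd: "fdim S"
  shows "V.dim S \<le> V.dim {x\<in>S. \<phi> x = 0} + 1"
proof -
  define f where "f x = cscale (\<phi> x) (1 :: 'a poly3)" for x
  have lin: "Vector_Spaces.linear cscale cscale f"
    by (rule linI) (auto simp: f_def add sc cscale_add_left cscale_cscale)
  have "f ` S \<subseteq> V.span {1}" unfolding f_def by (auto intro: V.span_scale V.span_base)
  then have "V.dim (f ` S) \<le> 1" using V.dim_le_card[of "f ` S" "{1}"] by simp
  moreover have "{x\<in>S. f x = 0} = {x\<in>S. \<phi> x = 0}"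
    unfolding f_def by (auto simp: cscale_def)
  ultimately show ?thesis using rank_nullity[OF lin S fd] by simp
qed

lemma subspace_inter_ker:
  fixes \<phi> :: "'a::field poly3 \<Rightarrow> 'a"
  assumes add: "\<And>x y. \<phi> (x + y) = \<phi> x + \<phi> y" and sc: "\<And>c x. \<phi> (cscale c x) = c * \<phi> x"
    and S: "V.subspace S"
  shows "V.subspace {x\<in>S. \<phi> x = 0}"
proof -
  have z: "\<phi> 0 = 0" using sc[of 0 0] by simp
  show ?thesis using S unfolding V.subspace_def by (auto simp: add sc z)
qed

lemma codim_many:
  fixes \<phi> :: "'b \<Rightarrow> 'a::field poly3 \<Rightarrow> 'a"
  assumes add: "\<And>H x y. \<phi> H (x + y) = \<phi> H x + \<phi> H y" and sc: "\<And>H c x. \<phi> H (cscale c x) = c * \<phi> H x"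
    and S: "V.subspace S" and fd: "fdim S" and fin: "finite B"
  shows "V.dim S \<le> V.dim {x\<in>S. \<forall>H\<in>B. \<phi> H x = 0} + card B"
  using fin
proof (induction B rule: finite_induct)
  case empty then show ?case by simp
next
  case (insert H B)
  define S' where "S' = {x\<in>S. \<forall>H\<in>B. \<phi> H x = 0}"
  have S'sub: "V.subspace S'"
  proof -
    have z: "\<phi> H' 0 = 0" for H' using sc[of H' 0 0] by simp
    show ?thesis using S unfolding V.subspace_def S'_def by (auto simp: add sc z)
  qed
  have S'fd: "fdim S'" by (rule fdim_subset[OF fd]) (auto simp: S'_def)
  have "V.dim S' \<le> V.dim {x\<in>S'. \<phi> H x = 0} + 1"
    by (rule codim1[OF add sc S'sub S'fd])
  moreover have "{x\<in>S'. \<phi> H x = 0} = {x\<in>S. \<forall>H'\<in>insert H B. \<phi> H' x = 0}"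
    unfolding S'_def by auto
  ultimately show ?case using insert by (simp add: S'_def)
qed

lemma homog_add: "homog n p \<Longrightarrow> homog n q \<Longrightarrow> homog n (p + q)"
  unfolding homog_def by (metis add.right_neutral coeff3_add)
lemma homog_cscale: "homog n p \<Longrightarrow> homog n (cscale k p)"
  unfolding homog_def by (metis coeff3_cscale mult_zero_right)
lemma homog_zero[simp]: "homog n 0"
  unfolding homog_def by simp

lemma subspace_graded: "V.subspace (graded n :: 'a::field poly3 set)"
  unfolding V.subspace_def graded_def using homog_add homog_cscale by auto

lemma homog_sum: "(\<And>x. x \<in> S \<Longrightarrow> homog n (f x :: 'a::field poly3)) \<Longrightarrow> homog n (sum f S)"
  using V.subspace_sum[OF subspace_graded, of S f n] by (simp add: graded_def)

definition monoms :: "nat \<Rightarrow> 'a::field poly3 set" where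
  "monoms n = (\<lambda>(a, b, c). m3 a b c) ` {(a, b, c). a + b + c = n}"

lemma finite_triples: "finite {(a, b, c). a + b + c = (n::nat)}"
proof -
  have "{(a, b, c). a + b + c = n} \<subseteq> {..n} \<times> {..n} \<times> {..n}" by auto
  then show ?thesis by (rule finite_subset) auto
qed

lemma finite_monoms: "finite (monoms n)"
  unfolding monoms_def using finite_triples by blast

lemma monoms_mem: "a + b + c = n \<Longrightarrow> m3 a b c \<in> monoms n"
  unfolding monoms_def by (rule image_eqI[of _ _ "(a, b, c)"]) auto

lemma graded_span: "graded n \<subseteq> V.span (monoms n :: 'a::field poly3 set)"
proof
  fix p :: "'a poly3" assume "p \<in> graded n"
  then have h: "homog n p" by (simp add: graded_def)
  have "p = (\<Sum>c\<le>n. \<Sum>b\<le>n. \<Sum>a\<le>n. cscale (coeff3 p a b c) (m3 a b c))"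
    using expand3[OF homog_BND[OF h]] .
  also have "\<dots> \<in> V.span (monoms n)"
  proof (intro V.span_sum)
    fix c b a
    show "cscale (coeff3 p a b c) (m3 a b c) \<in> V.span (monoms n)"
    proof (cases "coeff3 p a b c = 0")
      case True then show ?thesis by (simp add: V.span_zero)
    next
      case False
      then have "a + b + c = n" using h unfolding homog_def by blast
      then show ?thesis by (intro V.span_scale V.span_base monoms_mem)
    qed
  qed
  finally show "p \<in> V.span (monoms n)" .
qed

lemma fdim_graded: "fdim (graded n :: 'a::field poly3 set)"
  unfolding fdim_def using graded_span finite_monoms by blast

definition Dset :: "nat \<Rightarrow> 'a::field_char_0 poly3 \<Rightarrow> 'a poly3 set" where
  "Dset k G = (\<lambda>(a, b, c). Dop a b c G) ` {(a, b, c). a + b + c = k}"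

lemma finite_Dset: "finite (Dset k G)"
  unfolding Dset_def using finite_triples by blast

lemma Dset_iff: "H \<in> Dset k G \<longleftrightarrow> (\<exists>a b c. a + b + c = k \<and> H = Dop a b c G)"
proof
  assume "H \<in> Dset k G" then show "\<exists>a b c. a + b + c = k \<and> H = Dop a b c G"
    unfolding Dset_def by auto
next
  assume "\<exists>a b c. a + b + c = k \<and> H = Dop a b c G"
  then obtain a b c where "a + b + c = k" "H = Dop a b c G" by blast
  then show "H \<in> Dset k G" unfolding Dset_def by (intro image_eqI[of _ _ "(a, b, c)"]) auto
qed

lemma lin_act_left: "Vector_Spaces.linear cscale cscale (\<lambda>g. act g (G::'a::field_char_0 poly3))"
  by (rule linI) (auto simp: act_add_left act_cscale_left)

lemma lin_act_right: "Vector_Spaces.linear cscale cscale (act (g::'a::field_char_0 poly3))"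
  by (rule linI) (auto simp: act_add_right act_cscale_right)

lemma act_homog:
  fixes g G :: "'a::field_char_0 poly3"
  assumes G: "homog e G" and g: "homog k g"
  shows "homog (e - k) (act g G)" and "k > e \<Longrightarrow> act g G = 0"
proof -
  have eq: "act g G = (\<Sum>c\<le>k. \<Sum>b\<le>k. \<Sum>a\<le>k. cscale (coeff3 g a b c) (Dop a b c G))"
    using act_box[OF homog_BND[OF g]] .
  have t: "cscale (coeff3 g a b c) (Dop a b c G) = 0 \<or>
        (a + b + c = k \<and> homog (e - k) (cscale (coeff3 g a b c) (Dop a b c G))
          \<and> (k > e \<longrightarrow> Dop a b c G = 0))" for a b c
  proof (cases "coeff3 g a b c = 0")
    case True then show ?thesis by simp
  next
    case False
    then have "a + b + c = k" using g unfolding homog_def by blast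
    then show ?thesis using homog_Dop[OF G, of a b c] homog_cscale by auto
  qed
  show "homog (e - k) (act g G)" unfolding eq
    by (intro homog_sum) (metis homog_zero t)
  show "k > e \<Longrightarrow> act g G = 0" unfolding eq
    by (intro sum.neutral ballI) (metis cscale_zero t)
qed

lemma Dset_homog:
  fixes G :: "'a::field_char_0 poly3"
  assumes "homog e G" "H \<in> Dset k G"
  shows "homog (e - k) H"
  using assms homog_Dop unfolding Dset_iff by blast

lemma hilb_Img:
  fixes G :: "'a::field_char_0 poly3"
  shows "hilb G k = V.dim ((\<lambda>g. act g G) ` graded k)"
proof -
  have "V.dim (graded k :: 'a poly3 set) = V.dim {x\<in>graded k. act x G = 0} + V.dim ((\<lambda>g. act g G) ` graded k)"
    by (rule rank_nullity[OF lin_act_left subspace_graded fdim_graded])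
  moreover have "{x\<in>graded k. act x G = 0} = graded k \<inter> Ann G" by (auto simp: Ann_def)
  ultimately show ?thesis by (simp add: hilb_def kdim_V)
qed

lemma Img_span:
  fixes G :: "'a::field_char_0 poly3"
  shows "(\<lambda>g. act g G) ` graded k = V.span (Dset k G)"
proof
  show "(\<lambda>g. act g G) ` graded k \<subseteq> V.span (Dset k G)"
  proof
    fix H assume "H \<in> (\<lambda>g. act g G) ` graded k"
    then obtain g where g: "homog k g" "H = act g G" by (auto simp: graded_def)
    have "H = (\<Sum>c\<le>k. \<Sum>b\<le>k. \<Sum>a\<le>k. cscale (coeff3 g a b c) (Dop a b c G))"
      using act_box[OF homog_BND[OF g(1)]] g(2) by simp
    also have "\<dots> \<in> V.span (Dset k G)"
    proof (intro V.span_sum)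
      fix c b a
      show "cscale (coeff3 g a b c) (Dop a b c G) \<in> V.span (Dset k G)"
      proof (cases "coeff3 g a b c = 0")
        case True then show ?thesis by (simp add: V.span_zero)
      next
        case False
        then have "a + b + c = k" using g unfolding homog_def by blast
        then show ?thesis by (intro V.span_scale V.span_base) (auto simp: Dset_iff)
      qed
    qed
    finally show "H \<in> V.span (Dset k G)" .
  qed
next
  have sub: "V.subspace ((\<lambda>g. act g G) ` graded k)"
    by (rule VP.linear_subspace_image[OF lin_act_left subspace_graded])
  have "Dset k G \<subseteq> (\<lambda>g. act g G) ` graded k"
  proof
    fix H assume "H \<in> Dset k G"
    then obtain a b c where "a + b + c = k" "H = Dop a b c G" unfolding Dset_iff by blast
    then show "H \<in> (\<lambda>g. act g G) ` graded k"
      using act_m3[of a b c G] homog_m3[of a b c] by (auto simp: graded_def intro!: image_eqI)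
  qed
  then show "V.span (Dset k G) \<subseteq> (\<lambda>g. act g G) ` graded k"
    using V.span_minimal sub by blast
qed

lemma hilb_Dset: "hilb G k = V.dim (Dset k (G :: 'a::field_char_0 poly3))"
  using hilb_Img[of G k] Img_span[of G k] V.dim_span by simp

lemma dim_zero_set: "V.dim ({0} :: 'a::field poly3 set) = 0"
  using V.basis_card_eq_dim[of "{}" "{0::'a poly3}"] by (simp add: V.span_empty V.independent_empty)

lemma dim_single: "x \<noteq> 0 \<Longrightarrow> V.dim ({x} :: 'a::field poly3 set) = 1"
  using V.basis_card_eq_dim[of "{x}" "{x}"] V.dependent_single[of x] by (simp add: V.span_base)

lemma hilb_above:
  fixes G :: "'a::field_char_0 poly3"
  assumes "homog e G" "k > e" shows "hilb G k = 0"
proof -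
  have "Dset k G \<subseteq> {0}" using homog_Dop(2)[OF assms(1)] assms(2) by (auto simp: Dset_iff)
  moreover have "Dop k 0 0 G \<in> Dset k G" unfolding Dset_iff
    by (rule exI[where x=k], rule exI[where x=0], rule exI[where x=0]) simp
  ultimately have "Dset k G = {0}" by (metis empty_iff subset_singleton_iff)
  then show ?thesis using hilb_Dset dim_zero_set by metis
qed

lemma hilb_0:
  fixes G :: "'a::field_char_0 poly3"
  assumes "G \<noteq> 0" shows "hilb G 0 = 1"
proof -
  have "Dset 0 G = {G}" by (auto simp: Dset_iff)
  then show ?thesis using hilb_Dset dim_single assms by metis
qed

lemma hilb_zero_poly: "hilb (0 :: 'a::field_char_0 poly3) k = 0"
proof -
  have "Dop k 0 0 (0::'a poly3) \<in> Dset k 0" unfolding Dset_iff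
    by (rule exI[where x=k], rule exI[where x=0], rule exI[where x=0]) simp
  moreover have "Dset k (0 :: 'a poly3) \<subseteq> {0}" by (auto simp: Dset_iff)
  ultimately have "Dset k (0 :: 'a poly3) = {0}" by auto
  then show ?thesis using hilb_Dset dim_zero_set by metis
qed

lemma hilb_sym_le:
  fixes G :: "'a::field_char_0 poly3"
  assumes G: "homog e G" and i: "i \<le> e"
  shows "hilb G (e - i) \<le> hilb G i"
proof -
  define U where "U = V.span (Dset i G)"
  obtain B where B: "B \<subseteq> U" "V.independent B" "U \<subseteq> V.span B"
    using V.maximal_independent_subset by blast
  have fB: "finite B"
    using V.independent_span_bound[OF finite_Dset B(2)] B(1) U_def by blast
  have cB: "card B = hilb G i" using V.basis_card_eq_dim[OF B(1,3,2)] hilb_Dset[of G i] U_def V.dim_span by simp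
  have "Dset i G \<subseteq> graded (e - i)" using Dset_homog[OF G] by (auto simp: graded_def)
  then have Ugr: "U \<subseteq> graded (e - i)"
    unfolding U_def by (rule V.span_minimal[OF _ subspace_graded])
  define S where "S = (graded (e - i) :: 'a poly3 set)"
  define \<phi> where "\<phi> H g = coeff3 (act g H) 0 0 0" for H g :: "'a poly3"
  have "V.dim S \<le> V.dim {g\<in>S. \<forall>H\<in>B. \<phi> H g = 0} + card B"
    by (rule codim_many) (auto simp: \<phi>_def act_add_left act_cscale_left S_def subspace_graded fdim_graded fB)
  moreover have "{g\<in>S. \<forall>H\<in>B. \<phi> H g = 0} \<subseteq> S \<inter> Ann G"
  proof
    fix g assume g: "g \<in> {g\<in>S. \<forall>H\<in>B. \<phi> H g = 0}"
    then have hg: "homog (e - i) g" by (simp add: S_def graded_def)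
    have z: "act g H = 0" if "H \<in> B" for H
    proof (rule poly3_eqI)
      fix a b c
      have hH: "homog (e - i) H" using that B(1) Ugr by (auto simp: graded_def)
      have h0: "homog 0 (act g H)" using act_homog(1)[OF hH hg] by simp
      show "coeff3 (act g H) a b c = coeff3 0 a b c"
      proof (cases "a + b + c = 0")
        case True then show ?thesis using g that by (simp add: \<phi>_def)
      next
        case False then show ?thesis using h0 unfolding homog_def by auto
      qed
    qed
    have "V.span B \<subseteq> {H. act g H = 0}"
      using z by (intro V.span_minimal) (auto intro: VP.linear_subspace_kernel[OF lin_act_right])
    then have zD: "act g H = 0" if "H \<in> Dset i G" for H
      using that B(3) U_def V.span_superset by blast
    have "act g G = 0"
    proof (rule pairing_zero)
      show "homog i (act g G)" using act_homog(1)[OF G hg] i by simp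
      fix a b c assume "a + b + c = i"
      then have "Dop a b c G \<in> Dset i G" unfolding Dset_iff by blast
      then show "Dop a b c (act g G) = 0" using zD act_Dop_comm by metis
    qed
    then show "g \<in> S \<inter> Ann G" using g by (simp add: Ann_def)
  qed
  then have "V.dim {g\<in>S. \<forall>H\<in>B. \<phi> H g = 0} \<le> V.dim (S \<inter> Ann G)"
    by (rule dim_mono_fd[rotated]) (rule fdim_subset[OF fdim_graded[of "e - i"]], auto simp: S_def)
  ultimately have "V.dim S \<le> V.dim (S \<inter> Ann G) + hilb G i" using cB by linarith
  then show ?thesis by (simp add: hilb_def kdim_V S_def)
qed

lemma hilb_sym:
  fixes G :: "'a::field_char_0 poly3"
  assumes G: "homog e G" and i: "i \<le> e"
  shows "hilb G i = hilb G (e - i)"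
  using hilb_sym_le[OF G i] hilb_sym_le[OF G, of "e - i"] i by simp

lemma Dop_Suc0[simp]: "Dop (Suc 0) 0 0 F = dX F" "Dop 0 (Suc 0) 0 F = dY F" "Dop 0 0 (Suc 0) F = dZ F"
  by (simp_all add: Dop_def)

lemma first_derivs_zero:
  fixes x :: "'a::field_char_0 poly3"
  assumes "homog n x" "n \<ge> 1" "dX x = 0" "dY x = 0" "dZ x = 0"
  shows "x = 0"
proof (rule poly3_eqI)
  fix a b c
  show "coeff3 x a b c = coeff3 0 a b c"
  proof (cases a)
    case (Suc a')
    have "coeff3 (dX x) a' b c = 0" using assms(3) by simp
    then show ?thesis using Suc by (simp add: coeff3_dX del: of_nat_Suc)
  next
    case 0
    show ?thesis
    proof (cases b)
      case (Suc b')
      have "coeff3 (dY x) a b' c = 0" using assms(4) by simp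
      then show ?thesis using Suc by (simp add: coeff3_dY del: of_nat_Suc)
    next
      case b0: 0
      show ?thesis
      proof (cases c)
        case (Suc c')
        have "coeff3 (dZ x) a b c' = 0" using assms(5) by simp
        then show ?thesis using Suc by (simp add: coeff3_dZ del: of_nat_Suc)
      next
        case c0: 0
        have "coeff3 x 0 0 0 \<noteq> 0 \<longrightarrow> 0 + 0 + 0 = n" using assms(1) unfolding homog_def by blast
        then show ?thesis using assms(2) 0 b0 c0 by auto
      qed
    qed
  qed
qed

lemma act_linear_form:
  fixes L e :: "'a::field_char_0 poly3"
  assumes L: "homog 1 L"
  shows "act L e = cscale (coeff3 L 1 0 0) (dX e) + cscale (coeff3 L 0 1 0) (dY e) + cscale (coeff3 L 0 0 1) (dZ e)"
proof -
  have z: "a + b + c \<noteq> 1 \<Longrightarrow> coeff3 L a b c = 0" for a b c using L unfolding homog_def by blast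
  have "act L e = (\<Sum>c\<le>1. \<Sum>b\<le>1. \<Sum>a\<le>1. cscale (coeff3 L a b c) (Dop a b c e))"
    by (rule act_box[OF homog_BND[OF L]])
  also have "\<dots> = cscale (coeff3 L 1 0 0) (dX e) + cscale (coeff3 L 0 1 0) (dY e) + cscale (coeff3 L 0 0 1) (dZ e)"
    by (simp add: atMost_Suc z Dop_100 Dop_010 Dop_001 algebra_simps)
  finally show ?thesis .
qed

locale lsetup =
  fixes L :: "'a::field_char_0 poly3" and u v :: "'a poly3 \<Rightarrow> 'a poly3"
  assumes L1: "homog 1 L"
    and lin_u: "Vector_Spaces.linear cscale cscale u"
    and lin_v: "Vector_Spaces.linear cscale cscale v"
    and comm_uv: "\<And>x. u (v x) = v (u x)"
    and comm_Lu: "\<And>x. act L (u x) = u (act L x)"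
    and comm_Lv: "\<And>x. act L (v x) = v (act L x)"
    and deg_u: "\<And>n x. homog n x \<Longrightarrow> homog (n - 1) (u x)"
    and deg_v: "\<And>n x. homog n x \<Longrightarrow> homog (n - 1) (v x)"
    and kill: "\<And>n x. homog n x \<Longrightarrow> n \<ge> 1 \<Longrightarrow> act L x = 0 \<Longrightarrow> u x = 0 \<Longrightarrow> v x = 0 \<Longrightarrow> x = 0"
    and Dset_u: "\<And>H k G. H \<in> Dset k G \<Longrightarrow> u H \<in> Dset (Suc k) G"
    and Dset_v: "\<And>H k G. H \<in> Dset k G \<Longrightarrow> v H \<in> Dset (Suc k) G"

lemma lsetup_ex:
  fixes L :: "'a::field_char_0 poly3"
  assumes L: "homog 1 L" "L \<noteq> 0"
  shows "\<exists>u v. lsetup L u v"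
proof -
  have form: "act L e = cscale (coeff3 L 1 0 0) (dX e) + cscale (coeff3 L 0 1 0) (dY e) + cscale (coeff3 L 0 0 1) (dZ e)" for e
    by (rule act_linear_form[OF L(1)])
  have nz: "coeff3 L 1 0 0 \<noteq> 0 \<or> coeff3 L 0 1 0 \<noteq> 0 \<or> coeff3 L 0 0 1 \<noteq> 0"
  proof (rule ccontr)
    assume "\<not> ?thesis"
    then have "L = 0"
    proof (intro poly3_eqI)
      fix a b c
      assume h: "\<not> (coeff3 L 1 0 0 \<noteq> 0 \<or> coeff3 L 0 1 0 \<noteq> 0 \<or> coeff3 L 0 0 1 \<noteq> 0)"
      show "coeff3 L a b c = coeff3 0 a b c"
      proof (cases "a + b + c = 1")
        case True
        then have "(a, b, c) = (1, 0, 0) \<or> (a, b, c) = (0, 1, 0) \<or> (a, b, c) = (0, 0, 1)" by auto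
        then show ?thesis using h by auto
      next
        case False then show ?thesis using L(1) unfolding homog_def by auto
      qed
    qed
    with L(2) show False by simp
  qed
  have commX: "act L (dX x) = dX (act L x)" for x using act_Dop_comm[of L 1 0 0 x] by (simp add: Dop_100)
  have commY: "act L (dY x) = dY (act L x)" for x using act_Dop_comm[of L 0 1 0 x] by (simp add: Dop_010)
  have commZ: "act L (dZ x) = dZ (act L x)" for x using act_Dop_comm[of L 0 0 1 x] by (simp add: Dop_001)
  have degX: "homog n x \<Longrightarrow> homog (n - 1) (dX x)" for n and x :: "'a poly3" using homog_Dop(1)[of n x 1 0 0] by (simp add: Dop_100)
  have degY: "homog n x \<Longrightarrow> homog (n - 1) (dY x)" for n and x :: "'a poly3" using homog_Dop(1)[of n x 0 1 0] by (simp add: Dop_010)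
  have degZ: "homog n x \<Longrightarrow> homog (n - 1) (dZ x)" for n and x :: "'a poly3" using homog_Dop(1)[of n x 0 0 1] by (simp add: Dop_001)
  have DX: "dX H \<in> Dset (Suc k) G" if HD: "H \<in> Dset k G" for H k and G :: "'a poly3"
  proof -
    obtain a b c where abc: "a + b + c = k" "H = Dop a b c G" using HD Dset_iff by blast
    have "dX H = Dop (Suc a) b c G" using Dop_Dop[of 1 0 0 a b c G] abc(2) by (simp add: Dop_100)
    then show ?thesis unfolding Dset_iff using abc(1) by force
  qed
  have DY: "dY H \<in> Dset (Suc k) G" if HD: "H \<in> Dset k G" for H k and G :: "'a poly3"
  proof -
    obtain a b c where abc: "a + b + c = k" "H = Dop a b c G" using HD Dset_iff by blast
    have "dY H = Dop a (Suc b) c G" using Dop_Dop[of 0 1 0 a b c G] abc(2) by (simp add: Dop_010)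
    then show ?thesis unfolding Dset_iff using abc(1) by force
  qed
  have DZ: "dZ H \<in> Dset (Suc k) G" if HD: "H \<in> Dset k G" for H k and G :: "'a poly3"
  proof -
    obtain a b c where abc: "a + b + c = k" "H = Dop a b c G" using HD Dset_iff by blast
    have "dZ H = Dop a b (Suc c) G" using Dop_Dop[of 0 0 1 a b c G] abc(2) by (simp add: Dop_001)
    then show ?thesis unfolding Dset_iff using abc(1) by force
  qed
  have killX: "x = 0" if "homog n x" "n \<ge> 1" "act L x = 0" "dY x = 0" "dZ x = 0" "coeff3 L 1 0 0 \<noteq> 0"
    for n and x :: "'a poly3"
  proof -
    have "cscale (coeff3 L 1 0 0) (dX x) = 0" using that form[of x] by simp
    then have "dX x = 0" using that(6) by (simp add: cscale_def)
    then show ?thesis using first_derivs_zero that by blast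
  qed
  have killY: "x = 0" if "homog n x" "n \<ge> 1" "act L x = 0" "dX x = 0" "dZ x = 0" "coeff3 L 0 1 0 \<noteq> 0"
    for n and x :: "'a poly3"
  proof -
    have "cscale (coeff3 L 0 1 0) (dY x) = 0" using that form[of x] by simp
    then have "dY x = 0" using that(6) by (simp add: cscale_def)
    then show ?thesis using first_derivs_zero that by blast
  qed
  have killZ: "x = 0" if "homog n x" "n \<ge> 1" "act L x = 0" "dX x = 0" "dY x = 0" "coeff3 L 0 0 1 \<noteq> 0"
    for n and x :: "'a poly3"
  proof -
    have "cscale (coeff3 L 0 0 1) (dZ x) = 0" using that form[of x] by simp
    then have "dZ x = 0" using that(6) by (simp add: cscale_def)
    then show ?thesis using first_derivs_zero that by blast
  qed
  show ?thesis
  proof (cases "coeff3 L 1 0 0 \<noteq> 0")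
    case True
    have "lsetup L dY dZ"
      by (rule lsetup.intro[OF L(1) linear_dY linear_dZ dYZ commY commZ degY degZ killX[OF _ _ _ _ _ True] DY DZ])
    then show ?thesis by blast
  next
    case F1: False
    show ?thesis
    proof (cases "coeff3 L 0 1 0 \<noteq> 0")
      case True
      have "lsetup L dX dZ"
        by (rule lsetup.intro[OF L(1) linear_dX linear_dZ dXZ commX commZ degX degZ killY[OF _ _ _ _ _ True] DX DZ])
      then show ?thesis by blast
    next
      case False
      with nz F1 have T: "coeff3 L 0 0 1 \<noteq> 0" by blast
      have "lsetup L dX dY"
        by (rule lsetup.intro[OF L(1) linear_dX linear_dY dXY commX commY degX degY killZ[OF _ _ _ _ _ T] DX DY])
      then show ?thesis by blast
    qed
  qed
qed

lemma subspace_ker_in: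
  fixes f :: "'a::field poly3 \<Rightarrow> 'a poly3"
  assumes "Vector_Spaces.linear cscale cscale f" "V.subspace S"
  shows "V.subspace {x\<in>S. f x = 0}"
proof -
  have "{x\<in>S. f x = 0} = S \<inter> {x. f x = 0}" by auto
  then show ?thesis using V.subspace_inter[OF assms(2) VP.linear_subspace_kernel[OF assms(1)]] by simp
qed

lemma dim_graded0: "V.dim (graded 0 :: 'a::field poly3 set) \<le> 1"
proof -
  have "monoms 0 = {m3 0 0 0 :: 'a poly3}" unfolding monoms_def by auto
  then have c: "card (monoms 0 :: 'a poly3 set) = 1" by simp
  have "V.dim (graded 0 :: 'a poly3 set) \<le> card (monoms 0 :: 'a poly3 set)"
    by (rule V.dim_le_card[OF graded_span finite_monoms])
  then show ?thesis using c by simp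
qed

lemma fdim_zero: "fdim ({0} :: 'a::field poly3 set)"
  unfolding fdim_def by (rule exI[of _ "{}"]) (simp add: V.span_empty)

lemma dim_le_zero: "S \<subseteq> {0} \<Longrightarrow> V.dim (S :: 'a::field poly3 set) = 0"
  using dim_mono_fd[OF fdim_zero, of S] dim_zero_set[where 'a='a] by simp

lemma fdim_span_finite: "finite B \<Longrightarrow> fdim (V.span B)"
  unfolding fdim_def by blast

lemma act_Dset_image: "act L ` Dset k G = Dset k (act L (G::'a::field_char_0 poly3))"
proof
  show "act L ` Dset k G \<subseteq> Dset k (act L G)"
  proof
    fix H assume "H \<in> act L ` Dset k G"
    then obtain H0 where H0: "H0 \<in> Dset k G" "H = act L H0" by blast
    then obtain a b c where abc: "a + b + c = k" "H0 = Dop a b c G" unfolding Dset_iff by blast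
    then have "H = Dop a b c (act L G)" using H0(2) by (simp add: act_Dop_comm)
    then show "H \<in> Dset k (act L G)" unfolding Dset_iff using abc(1) by blast
  qed
  show "Dset k (act L G) \<subseteq> act L ` Dset k G"
  proof
    fix H assume "H \<in> Dset k (act L G)"
    then obtain a b c where abc: "a + b + c = k" "H = Dop a b c (act L G)" unfolding Dset_iff by blast
    then have "H = act L (Dop a b c G)" by (simp add: act_Dop_comm)
    moreover have "Dop a b c G \<in> Dset k G" unfolding Dset_iff using abc(1) by blast
    ultimately show "H \<in> act L ` Dset k G" by blast
  qed
qed

context lsetup
begin

definition K :: "nat \<Rightarrow> 'a poly3 set" where
  "K n = graded n \<inter> {x. act L x = 0}"

definition E :: "nat \<Rightarrow> 'a poly3 set" where
  "E n = K n \<inter> {x. v x = 0}"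

lemma K_sub: "V.subspace (K n)"
  unfolding K_def by (intro V.subspace_inter subspace_graded VP.linear_subspace_kernel[OF lin_act_right])

lemma E_sub: "V.subspace (E n)"
  unfolding E_def by (intro V.subspace_inter K_sub VP.linear_subspace_kernel[OF lin_v])

lemma K_fd: "fdim (K n)"
  by (rule fdim_subset[OF fdim_graded]) (auto simp: K_def)

lemma E_fd: "fdim (E n)"
  by (rule fdim_subset[OF K_fd]) (auto simp: E_def)

lemma u0: "u 0 = 0" using VP.linear_0[OF lin_u] .
lemma v0: "v 0 = 0" using VP.linear_0[OF lin_v] .

lemma E_dim: "V.dim (E n) \<le> 1"
proof (induction n)
  case 0
  have "V.dim (E 0) \<le> V.dim (graded 0 :: 'a poly3 set)"
    by (rule dim_mono_fd[OF fdim_graded]) (auto simp: E_def K_def)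
  then show ?case using dim_graded0[where 'a='a] by simp
next
  case (Suc n)
  have rn: "V.dim (E (Suc n)) = V.dim {x\<in>E (Suc n). u x = 0} + V.dim (u ` E (Suc n))"
    by (rule rank_nullity[OF lin_u E_sub E_fd])
  have "{x\<in>E (Suc n). u x = 0} \<subseteq> {0}"
    using kill by (auto simp: E_def K_def graded_def)
  then have z: "V.dim {x\<in>E (Suc n). u x = 0} = 0" by (rule dim_le_zero)
  have "u ` E (Suc n) \<subseteq> E n"
  proof
    fix y assume "y \<in> u ` E (Suc n)"
    then obtain x where x: "x \<in> E (Suc n)" "y = u x" by blast
    have "homog n y" using deg_u[of "Suc n" x] x by (auto simp: E_def K_def graded_def)
    moreover have "act L y = 0" using x comm_Lu u0 by (auto simp: E_def K_def)
    moreover have "v y = 0" using x comm_uv[of x, symmetric] u0 by (auto simp: E_def K_def)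
    ultimately show "y \<in> E n" by (simp add: E_def K_def graded_def)
  qed
  then have "V.dim (u ` E (Suc n)) \<le> V.dim (E n)" by (rule dim_mono_fd[OF E_fd])
  with rn z Suc show ?case by simp
qed

lemma K_dim: "V.dim (K n) \<le> n + 1"
proof (induction n)
  case 0
  have "V.dim (K 0) \<le> V.dim (graded 0 :: 'a poly3 set)"
    by (rule dim_mono_fd[OF fdim_graded]) (auto simp: K_def)
  then show ?case using dim_graded0[where 'a='a] by simp
next
  case (Suc n)
  have rn: "V.dim (K (Suc n)) = V.dim {x\<in>K (Suc n). v x = 0} + V.dim (v ` K (Suc n))"
    by (rule rank_nullity[OF lin_v K_sub K_fd])
  have "{x\<in>K (Suc n). v x = 0} = E (Suc n)" by (auto simp: E_def)
  then have e: "V.dim {x\<in>K (Suc n). v x = 0} \<le> 1" using E_dim by simp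
  have "v ` K (Suc n) \<subseteq> K n"
  proof
    fix y assume "y \<in> v ` K (Suc n)"
    then obtain x where x: "x \<in> K (Suc n)" "y = v x" by blast
    have "homog n y" using deg_v[of "Suc n" x] x by (auto simp: K_def graded_def)
    moreover have "act L y = 0" using x comm_Lv v0 by (auto simp: K_def)
    ultimately show "y \<in> K n" by (simp add: K_def graded_def)
  qed
  then have "V.dim (v ` K (Suc n)) \<le> V.dim (K n)" by (rule dim_mono_fd[OF K_fd])
  with rn e Suc show ?case by simp
qed

lemma P_lemma:
  assumes "V.subspace W" "W \<subseteq> K n"
  shows "min (V.dim W) n \<le> V.dim (V.span (u ` W \<union> v ` W))"
  using assms
proof (induction n arbitrary: W)
  case 0 then show ?case by simp
next
  case (Suc n)
  define T where "T = V.span (u ` W \<union> v ` W)"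
  have fdW: "fdim W" using fdim_subset[OF K_fd Suc.prems(2)] .
  have "u ` W \<union> v ` W \<subseteq> graded n"
    using Suc.prems(2) deg_u[of "Suc n"] deg_v[of "Suc n"] by (auto simp: K_def graded_def)
  then have Tgr: "T \<subseteq> graded n" unfolding T_def by (rule V.span_minimal[OF _ subspace_graded])
  have fdT: "fdim T" using fdim_subset[OF fdim_graded Tgr] .
  have Tsub: "V.subspace T" unfolding T_def by simp
  have rnW: "V.dim W = V.dim {x\<in>W. v x = 0} + V.dim (v ` W)"
    by (rule rank_nullity[OF lin_v Suc.prems(1) fdW])
  have "{x\<in>W. v x = 0} \<subseteq> E (Suc n)" using Suc.prems(2) by (auto simp: E_def)
  then have "V.dim {x\<in>W. v x = 0} \<le> V.dim (E (Suc n))" by (rule dim_mono_fd[OF E_fd])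
  then have le1: "V.dim {x\<in>W. v x = 0} \<le> 1" using E_dim[of "Suc n"] by linarith
  show ?case
  proof (cases "V.dim {x\<in>W. v x = 0} = 0")
    case True
    have "v ` W \<subseteq> T" unfolding T_def using V.span_superset[of "u ` W \<union> v ` W"] by blast
    then have "V.dim (v ` W) \<le> V.dim T" by (rule dim_mono_fd[OF fdT])
    then show ?thesis using rnW True T_def by simp
  next
    case False
    then have d1: "V.dim {x\<in>W. v x = 0} = 1" using le1 by simp
    have "\<exists>e0. e0 \<in> W \<and> v e0 = 0 \<and> e0 \<noteq> 0"
    proof (rule ccontr)
      assume "\<not> ?thesis"
      then have "{x\<in>W. v x = 0} \<subseteq> {0}" by auto
      then have "V.dim {x\<in>W. v x = 0} = 0" by (rule dim_le_zero)
      with False show False by simp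
    qed
    then obtain e0 where e0: "e0 \<in> W" "v e0 = 0" "e0 \<noteq> 0" by blast
    have e0K: "homog (Suc n) e0" "act L e0 = 0" using e0(1) Suc.prems(2) by (auto simp: K_def graded_def)
    have ue0: "u e0 \<noteq> 0" using kill[OF e0K(1) _ e0K(2) _ e0(2)] e0(3) by auto
    have "v (u e0) = 0" using e0(2) comm_uv[of e0, symmetric] u0 by simp
    then have ue0T: "u e0 \<in> {x\<in>T. v x = 0}"
      using e0(1) unfolding T_def by (auto intro: V.span_base)
    have rnT: "V.dim T = V.dim {x\<in>T. v x = 0} + V.dim (v ` T)"
      by (rule rank_nullity[OF lin_v Tsub fdT])
    have "V.dim {u e0} \<le> V.dim {x\<in>T. v x = 0}"
      by (rule dim_mono_fd[OF fdim_subset[OF fdT]]) (use ue0T in auto)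
    then have kT: "1 \<le> V.dim {x\<in>T. v x = 0}" using dim_single[OF ue0] by simp
    define W' where "W' = v ` W"
    have "v ` T = V.span (v ` (u ` W \<union> v ` W))"
      unfolding T_def using VP.linear_span_image[OF lin_v] by simp
    also have "v ` (u ` W \<union> v ` W) = u ` W' \<union> v ` W'"
      unfolding W'_def image_Un image_image comm_uv by simp
    finally have vT: "v ` T = V.span (u ` W' \<union> v ` W')" .
    have W'sub: "V.subspace W'" unfolding W'_def by (rule VP.linear_subspace_image[OF lin_v Suc.prems(1)])
    have W'K: "W' \<subseteq> K n"
    proof
      fix y assume "y \<in> W'"
      then obtain x where x: "x \<in> W" "y = v x" unfolding W'_def by blast
      have "homog n y" using deg_v[of "Suc n" x] x Suc.prems(2) by (auto simp: K_def graded_def)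
      moreover have "act L y = 0" using x comm_Lv v0 Suc.prems(2) by (auto simp: K_def)
      ultimately show "y \<in> K n" by (simp add: K_def graded_def)
    qed
    have IH: "min (V.dim W') n \<le> V.dim (v ` T)"
      using Suc.IH[OF W'sub W'K] vT by simp
    have "V.dim W' + 1 = V.dim W" using rnW d1 W'_def by simp
    then have "min (V.dim W) (Suc n) \<le> V.dim T" using IH rnT kT unfolding min_def by (auto split: if_splits)
    then show ?thesis by (simp add: T_def)
  qed
qed

definition Wb :: "'a poly3 \<Rightarrow> nat \<Rightarrow> nat \<Rightarrow> 'a poly3 set" where
  "Wb G e i = {x\<in>V.span (Dset (e - i) G). act L x = 0}"

definition bseq :: "'a poly3 \<Rightarrow> nat \<Rightarrow> nat \<Rightarrow> nat" where
  "bseq G e i = V.dim (Wb G e i)"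

lemma span_Dset_homog:
  assumes G: "homog e G"
  shows "V.span (Dset k G) \<subseteq> graded (e - k)"
proof -
  have "Dset k G \<subseteq> graded (e - k)" using Dset_homog[OF G] by (auto simp: graded_def)
  then show ?thesis by (rule V.span_minimal[OF _ subspace_graded])
qed

lemma Wb_sub: "V.subspace (Wb G e i)"
  unfolding Wb_def by (rule subspace_ker_in[OF lin_act_right]) simp

lemma Wb_fd: "fdim (Wb G e i)"
  by (rule fdim_subset[OF fdim_span_finite[OF finite_Dset]]) (auto simp: Wb_def)

lemma bseq_split:
  assumes G: "homog e G" and i: "1 \<le> i" "i \<le> e"
  shows "hilb G i = bseq G e i + hilb (act L G) (i - 1)"
proof -
  define S where "S = V.span (Dset (e - i) G)"
  have rn: "V.dim S = V.dim {x\<in>S. act L x = 0} + V.dim (act L ` S)"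
    by (rule rank_nullity[OF lin_act_right]) (auto simp: S_def fdim_span_finite finite_Dset)
  have "V.dim S = hilb G (e - i)" using hilb_Dset[of G "e - i"] V.dim_span S_def by simp
  also have "\<dots> = hilb G i" using hilb_sym[OF G i(2)] by simp
  finally have dS: "V.dim S = hilb G i" .
  have "act L ` S = V.span (Dset (e - i) (act L G))"
    unfolding S_def using VP.linear_span_image[OF lin_act_right] act_Dset_image by metis
  then have "V.dim (act L ` S) = hilb (act L G) (e - i)" using hilb_Dset V.dim_span by metis
  also have "\<dots> = hilb (act L G) (i - 1)"
  proof -
    have LG: "homog (e - 1) (act L G)" using act_homog(1)[OF G L1] .
    have "hilb (act L G) (i - 1) = hilb (act L G) ((e - 1) - (i - 1))"
      by (rule hilb_sym[OF LG]) (use i in simp)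
    moreover have "(e - 1) - (i - 1) = e - i" using i by simp
    ultimately show ?thesis by simp
  qed
  finally show ?thesis using rn dS unfolding bseq_def Wb_def S_def by simp
qed

lemma bseq_0:
  assumes G: "homog e G"
  shows "bseq G e 0 = hilb G 0"
proof -
  have "Wb G e 0 = V.span (Dset e G)"
  proof -
    have "act L x = 0" if "x \<in> V.span (Dset e G)" for x
    proof -
      have "homog 0 x" using span_Dset_homog[OF G, of e] that by (auto simp: graded_def)
      then show ?thesis using act_homog(2)[of 0 x 1 L] L1 by simp
    qed
    then show ?thesis unfolding Wb_def by auto
  qed
  then have "bseq G e 0 = hilb G e" unfolding bseq_def using hilb_Dset V.dim_span by metis
  also have "\<dots> = hilb G 0" using hilb_sym[OF G, of 0] by simp
  finally show ?thesis .
qed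

lemma bseq_le:
  assumes G: "homog e G" and i: "i \<le> e"
  shows "bseq G e i \<le> i + 1"
proof -
  have "Wb G e i \<subseteq> K i"
    using span_Dset_homog[OF G, of "e - i"] i by (auto simp: Wb_def K_def)
  then have "bseq G e i \<le> V.dim (K i)" unfolding bseq_def by (rule dim_mono_fd[OF K_fd])
  then show ?thesis using K_dim[of i] by simp
qed

lemma bseq_mac:
  assumes G: "homog e G" and i: "i + 1 \<le> e"
  shows "min (bseq G e (Suc i)) (i + 1) \<le> bseq G e i"
proof -
  define W1 where "W1 = Wb G e (Suc i)"
  have W1K: "W1 \<subseteq> K (Suc i)"
    using span_Dset_homog[OF G, of "e - Suc i"] i by (auto simp: W1_def Wb_def K_def)
  have P: "min (V.dim W1) (Suc i) \<le> V.dim (V.span (u ` W1 \<union> v ` W1))"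
    by (rule P_lemma[OF _ W1K]) (simp add: W1_def Wb_sub)
  have ei: "Suc (e - Suc i) = e - i" using i by simp
  have uD: "u ` V.span (Dset (e - Suc i) G) \<subseteq> V.span (Dset (e - i) G)"
  proof -
    have "u ` V.span (Dset (e - Suc i) G) = V.span (u ` Dset (e - Suc i) G)"
      using VP.linear_span_image[OF lin_u] by simp
    also have "\<dots> \<subseteq> V.span (Dset (e - i) G)"
      by (rule V.span_mono) (use Dset_u[of _ "e - Suc i" G] ei in auto)
    finally show ?thesis .
  qed
  have vD: "v ` V.span (Dset (e - Suc i) G) \<subseteq> V.span (Dset (e - i) G)"
  proof -
    have "v ` V.span (Dset (e - Suc i) G) = V.span (v ` Dset (e - Suc i) G)"
      using VP.linear_span_image[OF lin_v] by simp
    also have "\<dots> \<subseteq> V.span (Dset (e - i) G)"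
      by (rule V.span_mono) (use Dset_v[of _ "e - Suc i" G] ei in auto)
    finally show ?thesis .
  qed
  have "u ` W1 \<union> v ` W1 \<subseteq> Wb G e i"
    using uD vD comm_Lu comm_Lv u0 v0 by (auto simp: W1_def Wb_def)
  then have "V.span (u ` W1 \<union> v ` W1) \<subseteq> Wb G e i" by (rule V.span_minimal[OF _ Wb_sub])
  then have "V.dim (V.span (u ` W1 \<union> v ` W1)) \<le> bseq G e i"
    unfolding bseq_def by (rule dim_mono_fd[OF Wb_fd])
  with P show ?thesis by (simp add: W1_def bseq_def)
qed

end

definition Mac :: "nat \<Rightarrow> (nat \<Rightarrow> nat) \<Rightarrow> bool" where
  "Mac e b \<longleftrightarrow> (\<forall>i\<le>e. b i \<le> i + 1) \<and> (\<forall>i. i + 1 \<le> e \<longrightarrow> min (b (Suc i)) (i + 1) \<le> b i)"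

lemma Mac_le: "Mac e b \<Longrightarrow> i \<le> e \<Longrightarrow> b i \<le> i + 1"
  unfolding Mac_def by blast

lemma MacB:
  assumes "Mac e b" "b i \<le> i" "i \<le> k" "k \<le> e"
  shows "b k \<le> b i"
  using assms(3,4)
proof (induction k rule: dec_induct)
  case base then show ?case by simp
next
  case (step n)
  have "min (b (Suc n)) (n + 1) \<le> b n" using assms(1) step unfolding Mac_def by auto
  then show ?case using step assms(2) by (auto simp: min_def split: if_splits)
qed

lemma MacC:
  assumes "Mac e b" "k \<le> e" "k \<le> b k" "i < k"
  shows "b i = i + 1"
proof -
  have "b i \<le> i + 1" using Mac_le assms by simp
  moreover have "\<not> b i \<le> i"
  proof
    assume "b i \<le> i"
    then have "b k \<le> b i" using MacB[OF assms(1)] assms by simp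
    then show False using assms \<open>b i \<le> i\<close> by simp
  qed
  ultimately show ?thesis by simp
qed

lemma least_drop:
  fixes b :: "nat \<Rightarrow> nat"
  assumes "b k \<le> k"
  obtains j0 where "j0 \<le> k" "b j0 \<le> j0" "\<And>j. j < j0 \<Longrightarrow> \<not> b j \<le> j"
proof -
  have "\<exists>j. b j \<le> j \<and> j \<le> k" using assms by (intro exI[of _ k]) simp
  then obtain j0 where j0: "b j0 \<le> j0 \<and> j0 \<le> k" "\<And>j. j < j0 \<Longrightarrow> \<not> (b j \<le> j \<and> j \<le> k)"
    using exists_least_iff[of "\<lambda>j. b j \<le> j \<and> j \<le> k"] by blast
  show ?thesis using j0 that by force
qed

lemma stepA:
  assumes mac: "Mac (2 * m - 1) a" and a0: "a 0 = 1"
    and sym: "\<And>i. i \<le> 2 * m - 1 \<Longrightarrow> a i = a (2 * m - 1 - i)" and m1: "1 \<le> m"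
  shows "a m \<le> m" "\<And>i. i \<le> m \<Longrightarrow> a i = min (i + 1) (a m)"
proof -
  have am: "a m = a (m - 1)" using sym[of m] m1 by (simp add: numeral_2_eq_2)
  have "a (m - 1) \<le> m" using Mac_le[OF mac, of "m - 1"] m1 by simp
  then show amm: "a m \<le> m" using am by simp
  fix i assume i: "i \<le> m"
  show "a i = min (i + 1) (a m)"
  proof (cases "\<exists>j. j \<le> m - 1 \<and> a j \<le> j")
    case False
    then have aj: "j \<le> m - 1 \<Longrightarrow> a j = j + 1" for j using Mac_le[OF mac, of j] m1 by fastforce
    have "a m = m" using am aj[of "m - 1"] m1 by simp
    then show ?thesis using aj[of i] i by (cases "i = m") auto
  next
    case True
    then obtain j1 where j1: "j1 \<le> m - 1" "a j1 \<le> j1" by blast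
    obtain j0 where j0: "j0 \<le> j1" "a j0 \<le> j0" "\<And>j. j < j0 \<Longrightarrow> \<not> a j \<le> j"
      using least_drop[of a j1] j1(2) by blast
    have j0m: "j0 \<le> m - 1" using j0(1) j1(1) by simp
    have j0pos: "1 \<le> j0" using j0(2) a0 by (cases j0) auto
    have below: "j < j0 \<Longrightarrow> a j = j + 1" for j
      using j0(3)[of j] Mac_le[OF mac, of j] j0m by force
    have plateau: "a k = a m" if k: "j0 \<le> k" "k \<le> m" for k
    proof (cases "k = m")
      case True then show ?thesis by simp
    next
      case False
      have ak: "a k \<le> a j0" using MacB[OF mac j0(2), of k] k m1 by simp
      then have akk: "a k \<le> k" using j0(2) k by simp
      have "a m \<le> a k" using MacB[OF mac akk, of m] k m1 by simp
      moreover have "a (2 * m - 1 - k) \<le> a m" using MacB[OF mac amm, of "2 * m - 1 - k"] k False by simp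
      moreover have "a (2 * m - 1 - k) = a k" using sym[of k] k m1 by simp
      ultimately show ?thesis by simp
    qed
    have "a (j0 - 1) = j0" using below[of "j0 - 1"] j0pos by simp
    moreover have "a (2 * m - 1 - (j0 - 1)) = a (j0 - 1)" using sym[of "j0 - 1"] j0m by simp
    moreover have "a (2 * m - 1 - (j0 - 1)) \<le> a j0"
      using MacB[OF mac j0(2), of "2 * m - 1 - (j0 - 1)"] j0m j0pos by simp
    moreover have "a j0 = a m" using plateau[of j0] j0m by simp
    ultimately have "j0 \<le> a m" by simp
    moreover have "a m \<le> j0" using j0(2) plateau[of j0] j0m by simp
    ultimately have r: "a m = j0" by simp
    show ?thesis
    proof (cases "i < j0")
      case True then show ?thesis using below r by simp
    next
      case False then show ?thesis using plateau[of i] i r by simp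
    qed
  qed
qed

lemma stepB:
  assumes mac: "Mac (2 * m) b1"
    and sym1: "\<And>i. i \<le> 2 * m \<Longrightarrow> h1 i = h1 (2 * m - i)"
    and dec1: "\<And>i. 1 \<le> i \<Longrightarrow> i \<le> 2 * m \<Longrightarrow> h1 i = b1 i + a (i - 1)"
    and aform: "\<And>i. i \<le> 2 * m - 1 \<Longrightarrow> a i = min (min (i + 1) (2 * m - i)) r"
    and r1: "1 \<le> r" and rm: "r + 1 \<le> m" and c1: "r \<le> b1 m" and c2: "b1 m \<le> m"
  shows "\<And>i. i \<le> m \<Longrightarrow> b1 i = min (i + 1) (b1 m)"
proof -
  have symb: "b1 (2 * m - i) = b1 i" if i: "r \<le> i" "i \<le> m" for i
  proof -
    have "h1 i = h1 (2 * m - i)" using sym1[of i] i by simp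
    moreover have "h1 (2 * m - i) = b1 (2 * m - i) + a (2 * m - i - 1)"
      using dec1[of "2 * m - i"] i rm by simp
    moreover have "a (2 * m - i - 1) = r"
      using aform[of "2 * m - i - 1"] i rm by (simp add: min_def; arith)
    moreover have "h1 i = b1 i + a (i - 1)" using dec1[of i] i r1 by simp
    moreover have "a (i - 1) = r" using aform[of "i - 1"] i r1 rm by (simp add: min_def; arith)
    ultimately show ?thesis by simp
  qed
  obtain j0 where j0: "j0 \<le> m" "b1 j0 \<le> j0" "\<And>j. j < j0 \<Longrightarrow> \<not> b1 j \<le> j"
    using least_drop[of b1 m] c2 by blast
  have below: "j < j0 \<Longrightarrow> b1 j = j + 1" for j
    using j0(3)[of j] Mac_le[OF mac, of j] j0(1) by force
  have plateau: "b1 k = b1 m" if k: "j0 \<le> k" "r \<le> k" "k \<le> m" for k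
  proof -
    have "b1 k \<le> b1 j0" using MacB[OF mac j0(2), of k] k by simp
    then have bk: "b1 k \<le> k" using j0(2) k by simp
    have "b1 m \<le> b1 k" using MacB[OF mac bk, of m] k by simp
    moreover have "b1 (2 * m - k) \<le> b1 m" using MacB[OF mac c2, of "2 * m - k"] k by simp
    moreover have "b1 (2 * m - k) = b1 k" using symb k by simp
    ultimately show ?thesis by simp
  qed
  fix i assume i: "i \<le> m"
  show "b1 i = min (i + 1) (b1 m)"
  proof (cases "r + 1 \<le> j0")
    case True
    have "b1 (j0 - 1) = j0" using below[of "j0 - 1"] True by simp
    moreover have "b1 (2 * m - (j0 - 1)) = b1 (j0 - 1)" using symb[of "j0 - 1"] True j0(1) by simp
    moreover have "b1 (2 * m - (j0 - 1)) \<le> b1 j0"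
      using MacB[OF mac j0(2), of "2 * m - (j0 - 1)"] j0(1) True by simp
    ultimately have "j0 \<le> b1 j0" by simp
    then have "b1 j0 = j0" using j0(2) by simp
    moreover have "b1 j0 = b1 m" using plateau[of j0] True j0(1) by simp
    ultimately have c: "b1 m = j0" by simp
    show ?thesis
    proof (cases "i < j0")
      case True then show ?thesis using below c by simp
    next
      case False then show ?thesis using plateau[of i] i c True by simp
    qed
  next
    case False
    have "b1 r = b1 m" using plateau[of r] False rm by simp
    moreover have "b1 r \<le> b1 j0" using MacB[OF mac j0(2), of r] False rm by simp
    ultimately have "b1 m \<le> j0" using j0(2) by simp
    then have eq: "j0 = r" "b1 m = r" using False c1 by simp_all
    show ?thesis
    proof (cases "i < j0")
      case True then show ?thesis using below eq by simp
    next
      case False then show ?thesis using plateau[of i] i eq by simp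
    qed
  qed
qed

lemma stepC:
  assumes mac: "Mac (2 * m + 1) b0"
    and sym0: "\<And>i. i \<le> 2 * m + 1 \<Longrightarrow> h i = h (2 * m + 1 - i)"
    and dec0: "\<And>i. 1 \<le> i \<Longrightarrow> i \<le> 2 * m + 1 \<Longrightarrow> h i = b0 i + h1 (i - 1)"
    and sym1: "\<And>i. i \<le> 2 * m \<Longrightarrow> h1 i = h1 (2 * m - i)"
    and h1form: "\<And>i. i \<le> m \<Longrightarrow> h1 i = min i r + min (i + 1) c"
    and r1: "1 \<le> r" and rm: "r + 1 \<le> m" and rc: "r \<le> c" and cm: "c \<le> m"
    and cb: "c \<le> b0 m" and bm: "b0 m \<le> m + 1"
  shows "(\<forall>i\<le>m. b0 i = min (i + 1) (b0 m)) \<or>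
         (c = r \<and> b0 m = r \<and> (\<forall>i\<le>r. b0 i = i + 1) \<and> (\<forall>i. r < i \<and> i \<le> m \<longrightarrow> b0 i = r))"
proof -
  define M where "M = max c (r + 1)"
  have Mm: "M \<le> m" using cm rm by (simp add: M_def)
  have symb: "b0 (2 * m + 1 - i) = b0 i" if i: "M \<le> i" "i \<le> m" for i
  proof -
    have "h i = h (2 * m + 1 - i)" using sym0[of i] i by simp
    moreover have "h (2 * m + 1 - i) = b0 (2 * m + 1 - i) + h1 (2 * m - i)"
      using dec0[of "2 * m + 1 - i"] i by simp
    moreover have "h1 (2 * m - i) = h1 i" using sym1[of i] i by simp
    moreover have "h i = b0 i + h1 (i - 1)" using dec0[of i] i by (simp add: M_def)
    moreover have "h1 i = r + c" using h1form[of i] i by (simp add: M_def min_def; arith)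
    moreover have "h1 (i - 1) = r + c" using h1form[of "i - 1"] i by (simp add: M_def min_def; arith)
    ultimately show ?thesis by simp
  qed
  show ?thesis
  proof (cases "b0 m = m + 1")
    case True
    have "b0 i = i + 1" if "i \<le> m" for i
      using MacC[OF mac, of m i] True that by (cases "i = m") auto
    then show ?thesis using True by simp
  next
    case False
    then have bm': "b0 m \<le> m" using bm by simp
    obtain j0 where j0: "j0 \<le> m" "b0 j0 \<le> j0" "\<And>j. j < j0 \<Longrightarrow> \<not> b0 j \<le> j"
      using least_drop[of b0 m] bm' by blast
    have below: "j < j0 \<Longrightarrow> b0 j = j + 1" for j
      using j0(3)[of j] Mac_le[OF mac, of j] j0(1) by force
    have plateau: "b0 k = b0 m" if k: "j0 \<le> k" "M \<le> k" "k \<le> m" for k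
    proof -
      have "b0 k \<le> b0 j0" using MacB[OF mac j0(2), of k] k by simp
      then have bk: "b0 k \<le> k" using j0(2) k by simp
      have "b0 m \<le> b0 k" using MacB[OF mac bk, of m] k by simp
      moreover have "b0 (2 * m + 1 - k) \<le> b0 m" using MacB[OF mac bm', of "2 * m + 1 - k"] k by simp
      moreover have "b0 (2 * m + 1 - k) = b0 k" using symb k by simp
      ultimately show ?thesis by simp
    qed
    show ?thesis
    proof (cases "M + 1 \<le> j0")
      case True
      have "b0 (j0 - 1) = j0" using below[of "j0 - 1"] True by simp
      moreover have "b0 (2 * m + 1 - (j0 - 1)) = b0 (j0 - 1)" using symb[of "j0 - 1"] True j0(1) by simp
      moreover have "b0 (2 * m + 1 - (j0 - 1)) \<le> b0 j0"
        using MacB[OF mac j0(2), of "2 * m + 1 - (j0 - 1)"] j0(1) True by simp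
      ultimately have "j0 \<le> b0 j0" by simp
      then have "b0 j0 = j0" using j0(2) by simp
      moreover have "b0 j0 = b0 m" using plateau[of j0] True j0(1) by simp
      ultimately have c: "b0 m = j0" by simp
      have "b0 i = min (i + 1) (b0 m)" if i: "i \<le> m" for i
      proof (cases "i < j0")
        case True then show ?thesis using below c by simp
      next
        case False then show ?thesis using plateau[of i] i c True by simp
      qed
      then show ?thesis by blast
    next
      case False
      have bM: "b0 M = b0 m" using plateau[of M] False Mm by simp
      have "b0 M \<le> b0 j0" using MacB[OF mac j0(2), of M] False Mm by simp
      then have bj: "b0 m \<le> j0" using bM j0(2) by simp
      show ?thesis
      proof (cases "r + 1 \<le> c")
        case True
        then have "M = c" by (simp add: M_def)
        then have eq: "j0 = c" "b0 m = c" using False bj cb by simp_all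
        have "b0 i = min (i + 1) (b0 m)" if i: "i \<le> m" for i
        proof (cases "i < j0")
          case True then show ?thesis using below eq by simp
        next
          case False then show ?thesis using plateau[of i] i eq \<open>M = c\<close> by simp
        qed
        then show ?thesis by blast
      next
        case False
        then have cr: "c = r" using rc by simp
        then have MM: "M = r + 1" by (simp add: M_def)
        show ?thesis
        proof (cases "j0 = r + 1")
          case True
          have lo: "i \<le> r \<Longrightarrow> b0 i = i + 1" for i using below True by simp
          have hi: "r < i \<Longrightarrow> i \<le> m \<Longrightarrow> b0 i = b0 m" for i using plateau[of i] True MM by simp
          have "b0 m = r \<or> b0 m = r + 1" using bj True cb cr by auto
          then show ?thesis
          proof
            assume "b0 m = r"
            then show ?thesis using lo hi cr by auto
          next
            assume br: "b0 m = r + 1"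
            have "b0 i = min (i + 1) (b0 m)" if i: "i \<le> m" for i
              using lo[of i] hi[of i] i br by (cases "i \<le> r") auto
            then show ?thesis by blast
          qed
        next
          case False
          then have j0r: "j0 \<le> r" using \<open>\<not> M + 1 \<le> j0\<close> MM by simp
          then have eq: "j0 = r" "b0 m = r" using bj cb cr by simp_all
          have brr: "b0 r = r"
          proof -
            have "b0 r \<le> r" using j0(2) eq by simp
            moreover have "b0 M \<le> b0 r" using MacB[OF mac, of r M] \<open>b0 r \<le> r\<close> Mm MM by simp
            ultimately show ?thesis using bM eq by simp
          qed
          have "b0 i = min (i + 1) (b0 m)" if i: "i \<le> m" for i
          proof -
            consider "i < r" | "i = r" | "r < i" by linarith
            then show ?thesis
            proof cases
              case 1 then show ?thesis using below eq by simp
            next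
              case 2 then show ?thesis using brr eq by simp
            next
              case 3 then show ?thesis using plateau[of i] i eq MM by simp
            qed
          qed
          then show ?thesis by blast
        qed
      qed
    qed
  qed
qed

locale seqs =
  fixes m :: nat and A2 H1 H b1 b0 :: "nat \<Rightarrow> nat"
  assumes m1: "1 \<le> m"
    and macA: "Mac (2 * m - 1) A2" and a0: "A2 0 = 1"
    and symA: "\<And>i. i \<le> 2 * m - 1 \<Longrightarrow> A2 i = A2 (2 * m - 1 - i)"
    and mac1: "Mac (2 * m) b1" and h10: "H1 0 = 1"
    and dec1: "\<And>i. 1 \<le> i \<Longrightarrow> i \<le> 2 * m \<Longrightarrow> H1 i = b1 i + A2 (i - 1)"
    and sym1: "\<And>i. i \<le> 2 * m \<Longrightarrow> H1 i = H1 (2 * m - i)"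
    and mac0: "Mac (2 * m + 1) b0" and h0: "H 0 = 1"
    and dec0: "\<And>i. 1 \<le> i \<Longrightarrow> i \<le> 2 * m + 1 \<Longrightarrow> H i = b0 i + H1 (i - 1)"
    and sym0: "\<And>i. i \<le> 2 * m + 1 \<Longrightarrow> H i = H (2 * m + 1 - i)"
begin

lemma rA: "A2 m \<le> m" using stepA(1)[OF macA a0 symA m1] .
lemma aform0: "i \<le> m \<Longrightarrow> A2 i = min (i + 1) (A2 m)" using stepA(2)[OF macA a0 symA m1] .

lemma part2:
  assumes "1 \<le> A2 m" "A2 m + 1 \<le> m" "H1 m = m + A2 m + 1" "H m = (2 * m + 1) + A2 m"
  shows "(\<forall>i. i \<le> A2 m \<longrightarrow> H1 i = 2 * i + 1) \<and>
      (\<forall>i. A2 m + 1 \<le> i \<and> i \<le> m \<longrightarrow> H1 i = i + 1 + A2 m) \<and>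
      H 0 = 1 \<and>
      (\<forall>i. 1 \<le> i \<and> i \<le> A2 m + 1 \<longrightarrow> H i = 3 * i) \<and>
      (\<forall>i. A2 m + 2 \<le> i \<and> i \<le> m \<longrightarrow> H i = 2 * i + 1 + A2 m)"
proof -
  define r where "r = A2 m"
  have am1: "A2 (m - 1) = r" using aform0[of "m - 1"] m1 assms(2) r_def by (simp add: min_def)
  have "H1 m = b1 m + r" using dec1[of m] m1 am1 by simp
  then have b1m: "b1 m = m + 1" using assms(3) r_def by simp
  have b1i: "i \<le> m \<Longrightarrow> b1 i = i + 1" for i
    using MacC[OF mac1, of m i] b1m by (cases "i = m") auto
  have h1f: "i \<le> m \<Longrightarrow> H1 i = i + 1 + min i r" for i
  proof (cases "i = 0")
    case True then show ?thesis using h10 by simp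
  next
    case False
    assume i: "i \<le> m"
    have "A2 (i - 1) = min i r" using aform0[of "i - 1"] i False r_def by simp
    then show ?thesis using dec1[of i] False i b1i[of i] by simp
  qed
  have "H1 (m - 1) = m + r" using h1f[of "m - 1"] m1 assms(2) r_def by (simp add: min_def; arith)
  then have "H m = b0 m + m + r" using dec0[of m] m1 by simp
  then have b0m: "b0 m = m + 1" using assms(4) r_def by simp
  have b0i: "i \<le> m \<Longrightarrow> b0 i = i + 1" for i
    using MacC[OF mac0, of m i] b0m by (cases "i = m") auto
  have hf: "1 \<le> i \<Longrightarrow> i \<le> m \<Longrightarrow> H i = i + 1 + (i + min (i - 1) r)" for i
    using dec0[of i] b0i[of i] h1f[of "i - 1"] by simp
  have rm: "r + 1 \<le> m" using assms(2) r_def by simp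
  show ?thesis unfolding r_def[symmetric]
  proof (intro conjI allI impI)
    fix i assume "i \<le> r" then show "H1 i = 2 * i + 1" using h1f[of i] rm by simp
  next
    fix i assume "r + 1 \<le> i \<and> i \<le> m" then show "H1 i = i + 1 + r" using h1f[of i] by simp
  next
    show "H 0 = 1" by (rule h0)
  next
    fix i assume "1 \<le> i \<and> i \<le> r + 1" then show "H i = 3 * i" using hf[of i] rm by (simp add: min_def; arith)
  next
    fix i assume "r + 2 \<le> i \<and> i \<le> m" then show "H i = 2 * i + 1 + r" using hf[of i] by (simp add: min_def; arith)
  qed
qed

lemma part3:
  assumes "A2 m = m" "2 * m \<le> H1 m" "H1 m \<le> 2 * m + 1" "m + H1 m - 1 \<le> H m" "H m \<le> 3 * m"
  shows "\<forall>i. i < m \<longrightarrow> A2 i = i + 1 \<and> H1 i = 2 * i + 1 \<and> H 0 = 1 \<and> (1 \<le> i \<longrightarrow> H i = 3 * i)"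
proof -
  have ai: "i < m \<Longrightarrow> A2 i = i + 1" for i using aform0[of i] assms(1) by simp
  have "H1 m = b1 m + m" using dec1[of m] m1 ai[of "m - 1"] by simp
  then have "m \<le> b1 m" using assms(2) by simp
  then have b1i: "i < m \<Longrightarrow> b1 i = i + 1" for i using MacC[OF mac1, of m i] by simp
  have h1f: "i < m \<Longrightarrow> H1 i = 2 * i + 1" for i
  proof (cases "i = 0")
    case True then show ?thesis using h10 by simp
  next
    case False
    assume i: "i < m"
    then show ?thesis using dec1[of i] False b1i[of i] ai[of "i - 1"] by simp
  qed
  have "H1 (m - 1) = 2 * m - 1" using h1f[of "m - 1"] m1 by simp
  then have "H m = b0 m + (2 * m - 1)" using dec0[of m] m1 by simp
  then have "m \<le> b0 m" using assms(2,4) m1 by simp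
  then have b0i: "i < m \<Longrightarrow> b0 i = i + 1" for i using MacC[OF mac0, of m i] by simp
  have hf: "1 \<le> i \<Longrightarrow> i < m \<Longrightarrow> H i = 3 * i" for i
    using dec0[of i] b0i[of i] h1f[of "i - 1"] by simp
  show ?thesis using ai h1f h0 hf by simp
qed

lemma part1:
  fixes r s t :: nat
  assumes rdef: "r = A2 m" and sdef: "s = H1 m" and tdef: "t = H m"
    and r1: "1 \<le> r" and rm: "r + 1 \<le> m" and s1: "2 * r \<le> s" and s2: "s \<le> m + r"
    and t1: "2 * s \<le> t + r" and t2: "t \<le> m + s + 1"
  shows "(\<forall>i. i < r \<longrightarrow> A2 i = i + 1) \<and>
      (\<forall>i. r \<le> i \<and> i \<le> m \<longrightarrow> A2 i = r) \<and>
      (\<forall>i. i < r \<longrightarrow> H1 i = 2 * i + 1) \<and>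
      (\<forall>i. r \<le> i \<and> i + r + 1 \<le> s \<longrightarrow> H1 i = i + r + 1) \<and>
      (\<forall>i. s \<le> i + r \<and> i \<le> m \<longrightarrow> H1 i = s) \<and>
      (t = 3 * r \<longrightarrow>
         (H 0 = 1 \<and>
          (\<forall>i. 1 \<le> i \<and> i < r \<longrightarrow> H i = 3 * i) \<and>
          (\<forall>i. r \<le> i \<and> i \<le> m \<longrightarrow> H i = 3 * r))
       \<or>
         (H 0 = 1 \<and>
          (\<forall>i. 1 \<le> i \<and> i < r \<longrightarrow> H i = 3 * i) \<and>
          H r = 3 * r - 1 \<and>
          (\<forall>i. r + 1 \<le> i \<and> i \<le> m \<longrightarrow> H i = 3 * r))) \<and>
      (t \<noteq> 3 * r \<longrightarrow>
          H 0 = 1 \<and>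
          (\<forall>i. 1 \<le> i \<and> i \<le> r \<longrightarrow> H i = 3 * i) \<and>
          (\<forall>i. r + 1 \<le> i \<and> i + r + 1 \<le> s \<longrightarrow> H i = 2 * i + r + 1) \<and>
          (2 * s < t + r \<and> 2 * r < s \<longrightarrow> H (s - r) = 2 * (s - r) + r + 1) \<and>
          (2 * s < t + r \<and> s = 2 * r \<longrightarrow> H (s - r) = 2 * (s - r) + r) \<and>
          (\<forall>i. s + 1 \<le> i + r \<and> i + s + 1 \<le> t \<longrightarrow> H i = i + s + 1) \<and>
          (\<forall>i. t \<le> i + s \<and> i \<le> m \<longrightarrow> H i = t))"
proof -
  have a0f: "i \<le> m \<Longrightarrow> A2 i = min (i + 1) r" for i using aform0[of i] unfolding rdef by simp
  have aform: "A2 i = min (min (i + 1) (2 * m - i)) r" if i: "i \<le> 2 * m - 1" for i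
  proof (cases "i \<le> m")
    case True then show ?thesis using a0f[of i] rm by (simp add: min_def; arith)
  next
    case False
    have "A2 i = A2 (2 * m - 1 - i)" using symA[OF i] .
    also have "\<dots> = min (2 * m - 1 - i + 1) r" using a0f[of "2 * m - 1 - i"] False by simp
    also have "2 * m - 1 - i + 1 = 2 * m - i" using i False by arith
    finally show ?thesis using False by (simp add: min_def; arith)
  qed
  have am1: "A2 (m - 1) = r" using a0f[of "m - 1"] rm by (simp add: min_def; arith)
  define c where "c = b1 m"
  have sc: "s = c + r" using dec1[of m] m1 am1 sdef c_def by simp
  have rc: "r \<le> c" and cm: "c \<le> m" using sc s1 s2 by simp_all
  have c1': "r \<le> b1 m" and c2': "b1 m \<le> m" using rc cm unfolding c_def by simp_all
  have b1f: "i \<le> m \<Longrightarrow> b1 i = min (i + 1) c" for i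
    using stepB[OF mac1 sym1 dec1 aform r1 rm c1' c2', of i] unfolding c_def by simp
  have h1f: "H1 i = min i r + min (i + 1) c" if i: "i \<le> m" for i
  proof (cases "i = 0")
    case True then show ?thesis using h10 r1 rc by simp
  next
    case False
    then show ?thesis using dec1[of i] i b1f[of i] a0f[of "i - 1"] by simp
  qed
  have h1m1: "H1 (m - 1) = r + c" using h1f[of "m - 1"] rm rc cm by (simp add: min_def; arith)
  define \<beta> where "\<beta> = b0 m"
  have tb: "t = \<beta> + r + c" using dec0[of m] m1 h1m1 tdef \<beta>_def by simp
  have cb: "c \<le> \<beta>" and bm: "\<beta> \<le> m + 1" using tb sc t1 t2 by simp_all
  have disj: "(\<forall>i\<le>m. b0 i = min (i + 1) \<beta>) \<or>
         (c = r \<and> \<beta> = r \<and> (\<forall>i\<le>r. b0 i = i + 1) \<and> (\<forall>i. r < i \<and> i \<le> m \<longrightarrow> b0 i = r))"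
    using stepC[OF mac0 sym0 dec0 sym1 h1f r1 rm rc cm cb[unfolded \<beta>_def] bm[unfolded \<beta>_def]]
    unfolding \<beta>_def .
  have hf: "1 \<le> i \<Longrightarrow> i \<le> m \<Longrightarrow> H i = b0 i + min (i - 1) r + min i c" for i
    using dec0[of i] h1f[of "i - 1"] by simp
  have P1: "(\<forall>i. i < r \<longrightarrow> A2 i = i + 1) \<and>
      (\<forall>i. r \<le> i \<and> i \<le> m \<longrightarrow> A2 i = r) \<and>
      (\<forall>i. i < r \<longrightarrow> H1 i = 2 * i + 1) \<and>
      (\<forall>i. r \<le> i \<and> i + r + 1 \<le> s \<longrightarrow> H1 i = i + r + 1) \<and>
      (\<forall>i. s \<le> i + r \<and> i \<le> m \<longrightarrow> H1 i = s)"
  proof (intro conjI allI impI)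
    fix i assume "i < r" then show "A2 i = i + 1" using a0f[of i] rm by simp
  next
    fix i assume "r \<le> i \<and> i \<le> m" then show "A2 i = r" using a0f[of i] by simp
  next
    fix i assume "i < r" then show "H1 i = 2 * i + 1" using h1f[of i] rm rc by (simp add: min_def)
  next
    fix i assume "r \<le> i \<and> i + r + 1 \<le> s" then show "H1 i = i + r + 1"
      using h1f[of i] sc cm by (simp add: min_def; arith)
  next
    fix i assume "s \<le> i + r \<and> i \<le> m" then show "H1 i = s"
      using h1f[of i] sc rc by (simp add: min_def; arith)
  qed
  have P2: "t = 3 * r \<longrightarrow>
         (H 0 = 1 \<and>
          (\<forall>i. 1 \<le> i \<and> i < r \<longrightarrow> H i = 3 * i) \<and>
          (\<forall>i. r \<le> i \<and> i \<le> m \<longrightarrow> H i = 3 * r))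
       \<or>
         (H 0 = 1 \<and>
          (\<forall>i. 1 \<le> i \<and> i < r \<longrightarrow> H i = 3 * i) \<and>
          H r = 3 * r - 1 \<and>
          (\<forall>i. r + 1 \<le> i \<and> i \<le> m \<longrightarrow> H i = 3 * r))" (is "_ \<longrightarrow> ?C")
  proof
    assume t3: "t = 3 * r"
    then have cr: "c = r" and br: "\<beta> = r" using tb cb rc by simp_all
    from disj show ?C
    proof
      assume L: "\<forall>i\<le>m. b0 i = min (i + 1) \<beta>"
      have "H 0 = 1 \<and>
          (\<forall>i. 1 \<le> i \<and> i < r \<longrightarrow> H i = 3 * i) \<and>
          H r = 3 * r - 1 \<and>
          (\<forall>i. r + 1 \<le> i \<and> i \<le> m \<longrightarrow> H i = 3 * r)"
      proof (intro conjI allI impI)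
        show "H 0 = 1" by (rule h0)
      next
        fix i assume "1 \<le> i \<and> i < r" then show "H i = 3 * i"
          using hf[of i] L cr br rm by (simp add: min_def; arith)
      next
        show "H r = 3 * r - 1" using hf[of r] L cr br rm r1 by (simp add: min_def; arith)
      next
        fix i assume "r + 1 \<le> i \<and> i \<le> m" then show "H i = 3 * r"
          using hf[of i] L cr br by (simp add: min_def; arith)
      qed
      then show ?C by blast
    next
      assume R: "c = r \<and> \<beta> = r \<and> (\<forall>i\<le>r. b0 i = i + 1) \<and> (\<forall>i. r < i \<and> i \<le> m \<longrightarrow> b0 i = r)"
      have "H 0 = 1 \<and>
          (\<forall>i. 1 \<le> i \<and> i < r \<longrightarrow> H i = 3 * i) \<and>
          (\<forall>i. r \<le> i \<and> i \<le> m \<longrightarrow> H i = 3 * r)"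
      proof (intro conjI allI impI)
        show "H 0 = 1" by (rule h0)
      next
        fix i assume "1 \<le> i \<and> i < r" then show "H i = 3 * i"
          using hf[of i] R rm by (simp add: min_def; arith)
      next
        fix i assume i: "r \<le> i \<and> i \<le> m" show "H i = 3 * r"
        proof (cases "i = r")
          case True then show ?thesis using hf[of i] R r1 i by (simp add: min_def; arith)
        next
          case False then show ?thesis using hf[of i] R i by (simp add: min_def; arith)
        qed
      qed
      then show ?C by blast
    qed
  qed
  have P3: "t \<noteq> 3 * r \<longrightarrow>
          H 0 = 1 \<and>
          (\<forall>i. 1 \<le> i \<and> i \<le> r \<longrightarrow> H i = 3 * i) \<and>
          (\<forall>i. r + 1 \<le> i \<and> i + r + 1 \<le> s \<longrightarrow> H i = 2 * i + r + 1) \<and>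
          (2 * s < t + r \<and> 2 * r < s \<longrightarrow> H (s - r) = 2 * (s - r) + r + 1) \<and>
          (2 * s < t + r \<and> s = 2 * r \<longrightarrow> H (s - r) = 2 * (s - r) + r) \<and>
          (\<forall>i. s + 1 \<le> i + r \<and> i + s + 1 \<le> t \<longrightarrow> H i = i + s + 1) \<and>
          (\<forall>i. t \<le> i + s \<and> i \<le> m \<longrightarrow> H i = t)"
  proof
    assume t3: "t \<noteq> 3 * r"
    have L: "\<forall>i\<le>m. b0 i = min (i + 1) \<beta>" using disj t3 tb by auto
    have br: "r + 1 \<le> \<beta>"
    proof (rule ccontr)
      assume "\<not> r + 1 \<le> \<beta>"
      then have "\<beta> = r" "c = r" using cb rc by simp_all
      then show False using t3 tb by simp
    qed
    have hf2: "1 \<le> i \<Longrightarrow> i \<le> m \<Longrightarrow> H i = min (i + 1) \<beta> + min (i - 1) r + min i c" for i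
      using hf[of i] L by simp
    show "H 0 = 1 \<and>
          (\<forall>i. 1 \<le> i \<and> i \<le> r \<longrightarrow> H i = 3 * i) \<and>
          (\<forall>i. r + 1 \<le> i \<and> i + r + 1 \<le> s \<longrightarrow> H i = 2 * i + r + 1) \<and>
          (2 * s < t + r \<and> 2 * r < s \<longrightarrow> H (s - r) = 2 * (s - r) + r + 1) \<and>
          (2 * s < t + r \<and> s = 2 * r \<longrightarrow> H (s - r) = 2 * (s - r) + r) \<and>
          (\<forall>i. s + 1 \<le> i + r \<and> i + s + 1 \<le> t \<longrightarrow> H i = i + s + 1) \<and>
          (\<forall>i. t \<le> i + s \<and> i \<le> m \<longrightarrow> H i = t)"
    proof (intro conjI allI impI)
      show "H 0 = 1" by (rule h0)
    next
      fix i assume "1 \<le> i \<and> i \<le> r" then show "H i = 3 * i"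
        using hf2[of i] rm rc br by (simp add: min_def; arith)
    next
      fix i assume "r + 1 \<le> i \<and> i + r + 1 \<le> s" then show "H i = 2 * i + r + 1"
        using hf2[of i] sc cm cb by (simp add: min_def; arith)
    next
      assume "2 * s < t + r \<and> 2 * r < s" then show "H (s - r) = 2 * (s - r) + r + 1"
        using hf2[of c] sc cm tb by (simp add: min_def; arith)
    next
      assume "2 * s < t + r \<and> s = 2 * r" then show "H (s - r) = 2 * (s - r) + r"
        using hf2[of c] sc cm tb r1 by (simp add: min_def; arith)
    next
      fix i assume "s + 1 \<le> i + r \<and> i + s + 1 \<le> t" then show "H i = i + s + 1"
        using hf2[of i] sc tb bm rc by (simp add: min_def; arith)
    next
      fix i assume "t \<le> i + s \<and> i \<le> m" then show "H i = t"
        using hf2[of i] sc tb br cb rc by (simp add: min_def; arith)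
    qed
  qed
  show ?thesis using P1 P2 P3 by (elim conjE) (intro conjI; assumption)
qed

lemma comb:
  fixes d r s t :: nat
  assumes d_odd: "d = 2 * m + 1" and d_ge: "d \<ge> 3"
    and r_def: "r = A2 m" and s_def: "s = H1 m" and t_def: "t = H m"
  shows
   "(d \<ge> 5 \<and> 1 \<le> r \<and> r + 1 \<le> m \<and> 2 * r \<le> s \<and> s \<le> m + r
       \<and> 2 * s \<le> t + r \<and> t \<le> m + s + 1 \<longrightarrow>
      (\<forall>i. i < r \<longrightarrow> A2 i = i + 1) \<and>
      (\<forall>i. r \<le> i \<and> i \<le> m \<longrightarrow> A2 i = r) \<and>
      (\<forall>i. i < r \<longrightarrow> H1 i = 2 * i + 1) \<and>
      (\<forall>i. r \<le> i \<and> i + r + 1 \<le> s \<longrightarrow> H1 i = i + r + 1) \<and>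
      (\<forall>i. s \<le> i + r \<and> i \<le> m \<longrightarrow> H1 i = s) \<and>
      (t = 3 * r \<longrightarrow>
         (H 0 = 1 \<and>
          (\<forall>i. 1 \<le> i \<and> i < r \<longrightarrow> H i = 3 * i) \<and>
          (\<forall>i. r \<le> i \<and> i \<le> m \<longrightarrow> H i = 3 * r))
       \<or>
         (H 0 = 1 \<and>
          (\<forall>i. 1 \<le> i \<and> i < r \<longrightarrow> H i = 3 * i) \<and>
          H r = 3 * r - 1 \<and>
          (\<forall>i. r + 1 \<le> i \<and> i \<le> m \<longrightarrow> H i = 3 * r))) \<and>
      (t \<noteq> 3 * r \<longrightarrow>
          H 0 = 1 \<and>
          (\<forall>i. 1 \<le> i \<and> i \<le> r \<longrightarrow> H i = 3 * i) \<and>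
          (\<forall>i. r + 1 \<le> i \<and> i + r + 1 \<le> s \<longrightarrow> H i = 2 * i + r + 1) \<and>
          (2 * s < t + r \<and> 2 * r < s \<longrightarrow> H (s - r) = 2 * (s - r) + r + 1) \<and>
          (2 * s < t + r \<and> s = 2 * r \<longrightarrow> H (s - r) = 2 * (s - r) + r) \<and>
          (\<forall>i. s + 1 \<le> i + r \<and> i + s + 1 \<le> t \<longrightarrow> H i = i + s + 1) \<and>
          (\<forall>i. t \<le> i + s \<and> i \<le> m \<longrightarrow> H i = t)))
    \<and>
    (1 \<le> r \<and> r + 1 \<le> m \<and> s = m + r + 1 \<and> t = d + r \<longrightarrow>
      (\<forall>i. i \<le> r \<longrightarrow> H1 i = 2 * i + 1) \<and>
      (\<forall>i. r + 1 \<le> i \<and> i \<le> m \<longrightarrow> H1 i = i + 1 + r) \<and>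
      H 0 = 1 \<and>
      (\<forall>i. 1 \<le> i \<and> i \<le> r + 1 \<longrightarrow> H i = 3 * i) \<and>
      (\<forall>i. r + 2 \<le> i \<and> i \<le> m \<longrightarrow> H i = 2 * i + 1 + r))
    \<and>
    (r = m \<and> d - 1 \<le> s \<and> s \<le> d \<and> m + s - 1 \<le> t \<and> t \<le> 3 * m \<longrightarrow>
      (\<forall>i. i < m \<longrightarrow>
         A2 i = i + 1 \<and>
         H1 i = 2 * i + 1 \<and>
         H 0 = 1 \<and>
         (1 \<le> i \<longrightarrow> H i = 3 * i)))"
proof (rule conjI[OF impI conjI[OF impI impI]])
  assume h: "d \<ge> 5 \<and> 1 \<le> r \<and> r + 1 \<le> m \<and> 2 * r \<le> s \<and> s \<le> m + r
       \<and> 2 * s \<le> t + r \<and> t \<le> m + s + 1"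
  show "(\<forall>i. i < r \<longrightarrow> A2 i = i + 1) \<and>
      (\<forall>i. r \<le> i \<and> i \<le> m \<longrightarrow> A2 i = r) \<and>
      (\<forall>i. i < r \<longrightarrow> H1 i = 2 * i + 1) \<and>
      (\<forall>i. r \<le> i \<and> i + r + 1 \<le> s \<longrightarrow> H1 i = i + r + 1) \<and>
      (\<forall>i. s \<le> i + r \<and> i \<le> m \<longrightarrow> H1 i = s) \<and>
      (t = 3 * r \<longrightarrow>
         (H 0 = 1 \<and>
          (\<forall>i. 1 \<le> i \<and> i < r \<longrightarrow> H i = 3 * i) \<and>
          (\<forall>i. r \<le> i \<and> i \<le> m \<longrightarrow> H i = 3 * r))
       \<or>
         (H 0 = 1 \<and>
          (\<forall>i. 1 \<le> i \<and> i < r \<longrightarrow> H i = 3 * i) \<and>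
          H r = 3 * r - 1 \<and>
          (\<forall>i. r + 1 \<le> i \<and> i \<le> m \<longrightarrow> H i = 3 * r))) \<and>
      (t \<noteq> 3 * r \<longrightarrow>
          H 0 = 1 \<and>
          (\<forall>i. 1 \<le> i \<and> i \<le> r \<longrightarrow> H i = 3 * i) \<and>
          (\<forall>i. r + 1 \<le> i \<and> i + r + 1 \<le> s \<longrightarrow> H i = 2 * i + r + 1) \<and>
          (2 * s < t + r \<and> 2 * r < s \<longrightarrow> H (s - r) = 2 * (s - r) + r + 1) \<and>
          (2 * s < t + r \<and> s = 2 * r \<longrightarrow> H (s - r) = 2 * (s - r) + r) \<and>
          (\<forall>i. s + 1 \<le> i + r \<and> i + s + 1 \<le> t \<longrightarrow> H i = i + s + 1) \<and>
          (\<forall>i. t \<le> i + s \<and> i \<le> m \<longrightarrow> H i = t))"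
  proof -
    from h have q: "1 \<le> r" "r + 1 \<le> m" "2 * r \<le> s" "s \<le> m + r" "2 * s \<le> t + r" "t \<le> m + s + 1"
      by simp_all
    show ?thesis by (rule part1[OF r_def s_def t_def q])
  qed
next
  assume h: "1 \<le> r \<and> r + 1 \<le> m \<and> s = m + r + 1 \<and> t = d + r"
  have "1 \<le> A2 m" "A2 m + 1 \<le> m" "H1 m = m + A2 m + 1" "H m = (2 * m + 1) + A2 m"
    using h r_def s_def t_def d_odd by simp_all
  note p = part2[OF this]
  show "(\<forall>i. i \<le> r \<longrightarrow> H1 i = 2 * i + 1) \<and>
      (\<forall>i. r + 1 \<le> i \<and> i \<le> m \<longrightarrow> H1 i = i + 1 + r) \<and>
      H 0 = 1 \<and>
      (\<forall>i. 1 \<le> i \<and> i \<le> r + 1 \<longrightarrow> H i = 3 * i) \<and>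
      (\<forall>i. r + 2 \<le> i \<and> i \<le> m \<longrightarrow> H i = 2 * i + 1 + r)"
    using p unfolding r_def .
next
  assume h: "r = m \<and> d - 1 \<le> s \<and> s \<le> d \<and> m + s - 1 \<le> t \<and> t \<le> 3 * m"
  have "A2 m = m" "2 * m \<le> H1 m" "H1 m \<le> 2 * m + 1" "m + H1 m - 1 \<le> H m" "H m \<le> 3 * m"
    using h r_def s_def t_def d_odd by simp_all
  then show "\<forall>i. i < m \<longrightarrow>
         A2 i = i + 1 \<and>
         H1 i = 2 * i + 1 \<and>
         H 0 = 1 \<and>
         (1 \<le> i \<longrightarrow> H i = 3 * i)"
    by (rule part3)
qed

end

theorem theorem4p4:
  fixes F L :: "'a::field_char_0 poly3"
    and d m r s t :: nat
  assumes F_nz: "F \<noteq> 0" and F_hom: "homog d F"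
    and d_odd: "d = 2 * m + 1" and d_ge: "d \<ge> 3"
    and l_lin: "homog 1 L"
    and l2: "act (L ^ 2) F \<noteq> 0" and l3: "act (L ^ 3) F = 0"
    and r_def: "r = hilb (act (L ^ 2) F) m"
    and s_def: "s = hilb (act (L ^ 1) F) m"
    and t_def: "t = hilb F m"
  shows
   "(d \<ge> 5 \<and> 1 \<le> r \<and> r + 1 \<le> m \<and> 2 * r \<le> s \<and> s \<le> m + r
       \<and> 2 * s \<le> t + r \<and> t \<le> m + s + 1 \<longrightarrow>
      (\<forall>i. i < r \<longrightarrow> hilb (act (L ^ 2) F) i = i + 1) \<and>
      (\<forall>i. r \<le> i \<and> i \<le> m \<longrightarrow> hilb (act (L ^ 2) F) i = r) \<and>
      (\<forall>i. i < r \<longrightarrow> hilb (act (L ^ 1) F) i = 2 * i + 1) \<and>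
      (\<forall>i. r \<le> i \<and> i + r + 1 \<le> s \<longrightarrow> hilb (act (L ^ 1) F) i = i + r + 1) \<and>
      (\<forall>i. s \<le> i + r \<and> i \<le> m \<longrightarrow> hilb (act (L ^ 1) F) i = s) \<and>
      (t = 3 * r \<longrightarrow>
         (hilb F 0 = 1 \<and>
          (\<forall>i. 1 \<le> i \<and> i < r \<longrightarrow> hilb F i = 3 * i) \<and>
          (\<forall>i. r \<le> i \<and> i \<le> m \<longrightarrow> hilb F i = 3 * r))
       \<or>
         (hilb F 0 = 1 \<and>
          (\<forall>i. 1 \<le> i \<and> i < r \<longrightarrow> hilb F i = 3 * i) \<and>
          hilb F r = 3 * r - 1 \<and>
          (\<forall>i. r + 1 \<le> i \<and> i \<le> m \<longrightarrow> hilb F i = 3 * r))) \<and>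
      (t \<noteq> 3 * r \<longrightarrow>
          hilb F 0 = 1 \<and>
          (\<forall>i. 1 \<le> i \<and> i \<le> r \<longrightarrow> hilb F i = 3 * i) \<and>
          (\<forall>i. r + 1 \<le> i \<and> i + r + 1 \<le> s \<longrightarrow> hilb F i = 2 * i + r + 1) \<and>
          (2 * s < t + r \<and> 2 * r < s \<longrightarrow> hilb F (s - r) = 2 * (s - r) + r + 1) \<and>
          (2 * s < t + r \<and> s = 2 * r \<longrightarrow> hilb F (s - r) = 2 * (s - r) + r) \<and>
          (\<forall>i. s + 1 \<le> i + r \<and> i + s + 1 \<le> t \<longrightarrow> hilb F i = i + s + 1) \<and>
          (\<forall>i. t \<le> i + s \<and> i \<le> m \<longrightarrow> hilb F i = t)))
    \<and>
    (1 \<le> r \<and> r + 1 \<le> m \<and> s = m + r + 1 \<and> t = d + r \<longrightarrow>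
      (\<forall>i. i \<le> r \<longrightarrow> hilb (act (L ^ 1) F) i = 2 * i + 1) \<and>
      (\<forall>i. r + 1 \<le> i \<and> i \<le> m \<longrightarrow> hilb (act (L ^ 1) F) i = i + 1 + r) \<and>
      hilb F 0 = 1 \<and>
      (\<forall>i. 1 \<le> i \<and> i \<le> r + 1 \<longrightarrow> hilb F i = 3 * i) \<and>
      (\<forall>i. r + 2 \<le> i \<and> i \<le> m \<longrightarrow> hilb F i = 2 * i + 1 + r))
    \<and>
    (r = m \<and> d - 1 \<le> s \<and> s \<le> d \<and> m + s - 1 \<le> t \<and> t \<le> 3 * m \<longrightarrow>
      (\<forall>i. i < m \<longrightarrow>
         hilb (act (L ^ 2) F) i = i + 1 \<and>
         hilb (act (L ^ 1) F) i = 2 * i + 1 \<and>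
         hilb F 0 = 1 \<and>
         (1 \<le> i \<longrightarrow> hilb F i = 3 * i)))"
proof -
  have m1: "1 \<le> m" using d_odd d_ge by simp
  have Lnz: "L \<noteq> 0"
  proof
    assume "L = 0"
    then have "act (L ^ 2) F = 0" by simp
    with l2 show False by simp
  qed
  obtain u v where ls: "lsetup L u v" using lsetup_ex[OF l_lin Lnz] by blast
  interpret ls: lsetup L u v by (rule ls)
  define G1 where "G1 = act (L ^ 1) F"
  define G2 where "G2 = act (L ^ 2) F"
  have LF: "act L F = G1" by (simp add: G1_def)
  have LG1: "act L G1 = G2" by (simp add: G1_def G2_def power2_eq_square act_mult)
  have "L ^ 3 = L * L ^ 2" by (simp add: power3_eq_cube power2_eq_square mult.assoc)
  then have LG2: "act L G2 = 0" using l3 by (simp add: G2_def act_mult)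
  have hF: "homog (2 * m + 1) F" using F_hom d_odd by simp
  have hG1: "homog (2 * m) G1" using act_homog(1)[OF hF l_lin] LF by simp
  have hG2: "homog (2 * m - 1) G2" using act_homog(1)[OF hG1 l_lin] LG1 by simp
  have G2nz: "G2 \<noteq> 0" using l2 G2_def by simp
  have G1nz: "G1 \<noteq> 0" using G2nz LG1 by auto
  define b2 where "b2 = ls.bseq G2 (2 * m - 1)"
  define b1 where "b1 = ls.bseq G1 (2 * m)"
  define b0 where "b0 = ls.bseq F (2 * m + 1)"
  have A2eq: "hilb G2 i = b2 i" if i: "i \<le> 2 * m - 1" for i
  proof (cases "i = 0")
    case True then show ?thesis using ls.bseq_0[OF hG2] b2_def by simp
  next
    case False
    then show ?thesis using ls.bseq_split[OF hG2, of i] i LG2 hilb_zero_poly b2_def by simp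
  qed
  have macA: "Mac (2 * m - 1) (hilb G2)"
    unfolding Mac_def
  proof (intro conjI allI impI)
    fix i assume i: "i \<le> 2 * m - 1"
    then show "hilb G2 i \<le> i + 1" using A2eq[OF i] ls.bseq_le[OF hG2 i] b2_def by simp
  next
    fix i assume i: "i + 1 \<le> 2 * m - 1"
    show "min (hilb G2 (Suc i)) (i + 1) \<le> hilb G2 i"
      using A2eq[of i] A2eq[of "Suc i"] ls.bseq_mac[OF hG2 i] b2_def i by simp
  qed
  have mac1: "Mac (2 * m) b1"
    unfolding Mac_def b1_def using ls.bseq_le[OF hG1] ls.bseq_mac[OF hG1] by blast
  have mac0: "Mac (2 * m + 1) b0"
    unfolding Mac_def b0_def using ls.bseq_le[OF hF] ls.bseq_mac[OF hF] by blast
  have sq: "seqs m (hilb G2) (hilb G1) (hilb F) b1 b0"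
  proof (rule seqs.intro)
    show "1 \<le> m" by (rule m1)
    show "Mac (2 * m - 1) (hilb G2)" by (rule macA)
    show "hilb G2 0 = 1" by (rule hilb_0[OF G2nz])
    show "\<And>i. i \<le> 2 * m - 1 \<Longrightarrow> hilb G2 i = hilb G2 (2 * m - 1 - i)" by (rule hilb_sym[OF hG2])
    show "Mac (2 * m) b1" by (rule mac1)
    show "hilb G1 0 = 1" by (rule hilb_0[OF G1nz])
    show "\<And>i. 1 \<le> i \<Longrightarrow> i \<le> 2 * m \<Longrightarrow> hilb G1 i = b1 i + hilb G2 (i - 1)"
      using ls.bseq_split[OF hG1] LG1 b1_def by simp
    show "\<And>i. i \<le> 2 * m \<Longrightarrow> hilb G1 i = hilb G1 (2 * m - i)" by (rule hilb_sym[OF hG1])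
    show "Mac (2 * m + 1) b0" by (rule mac0)
    show "hilb F 0 = 1" by (rule hilb_0[OF F_nz])
    show "\<And>i. 1 \<le> i \<Longrightarrow> i \<le> 2 * m + 1 \<Longrightarrow> hilb F i = b0 i + hilb G1 (i - 1)"
      using ls.bseq_split[OF hF] LF b0_def by simp
    show "\<And>i. i \<le> 2 * m + 1 \<Longrightarrow> hilb F i = hilb F (2 * m + 1 - i)" by (rule hilb_sym[OF hF])
  qed
  have r': "r = hilb G2 m" using r_def G2_def by simp
  have s': "s = hilb G1 m" using s_def G1_def by simp
  show ?thesis
    using seqs.comb[OF sq d_odd d_ge r' s' t_def] unfolding G1_def G2_def .
qed

end
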